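(* Let $(X,\mathbf R)$ be a symmetric association scheme with $D$ classes, metric with respect to $A_0,\dots,A_D$. Fix $x\in X$, let $T=T(x)$, and let $t\in\{1,\dots,D\}$. For $\chi\in V$ the following are equivalent: (i) $\chi$ is orthogonal to every irreducible $T$-module $W\subseteq V$ with $1\le r(W)\le t$; (ii) $F\chi$ is a relative $t$-codesign with respect to $x$ for every $F\in T$. Moreover, if every irreducible $T$-module in $V$ with endpoint at most $t$ is thin, then the weaker condition "$A_\ell\chi$ is a relative $t$-codesign with respect to $x$ for every $0\le\ell\le D$" already implies (i) (and hence (ii)).
   Context: $(X,\mathbf R)$ is a symmetric association scheme with associate matrices $A_0=I,\dots,A_D$, Bose–Mesner algebra $M$, primitive idempotents $E_0=|X|^{-1}J,\dots,E_D$. Metric with respect to $A_0,\dots,A_D$ means $(X,R_1)$ is a distance-regular graph with $R_i$ its distance-$i$ relation. $V=\mathbb C^X$ with standard basis $\{\hat y\}$ and standard Hermitian inner product. For $x\in X$: $E_i^*(x)$ is diagonal with $(E_i^*(x))_{yy}=(A_i)_{xy}$; $A_i^*(x)$ is diagonal with $(A_i^*(x))_{yy}=|X|(E_i)_{xy}$; the Terwilliger algebra $T(x)$ is the subalgebra of $\mathrm{Mat}_X(\mathbb C)$ generated by $M$ and the $A_i^*(x)$ (equivalently the $E_i^*(x)$). For an irreducible $T(x)$-module $W\subseteq V$, its endpoint is $r(W)=\min\{i:E_i^*(x)W\ne0\}$, and $W$ is thin if $\dim E_i^*(x)W\le 1$ for all $i$. A vector $\psi$ is a relative $t$-codesign with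 respect to $x$ if $E_i^*(x)\psi$ and $A_i\hat x$ are linearly dependent for all $1\le i\le t$. *)

theory Defs
  imports Complex_Main
begin

text \<open>The vertex set X is the (finite) universe of the type 'a.
  Matrices indexed by X are functions 'a => 'a => complex, vectors in V = C^X
  are functions 'a => complex.\<close>

definition mmult :: "('a::finite \<Rightarrow> 'a \<Rightarrow> complex) \<Rightarrow> ('a \<Rightarrow> 'a \<Rightarrow> complex) \<Rightarrow> 'a \<Rightarrow> 'a \<Rightarrow> complex" where
  "mmult A B = (\<lambda>y z. \<Sum>w\<in>UNIV. A y w * B w z)"

definition mvmult :: "('a::finite \<Rightarrow> 'a \<Rightarrow> complex) \<Rightarrow> ('a \<Rightarrow> complex) \<Rightarrow> 'a \<Rightarrow> complex" where
  "mvmult A v = (\<lambda>y. \<Sum>z\<in>UNIV. A y z * v z)"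

definition basis_vec :: "'a \<Rightarrow> 'a \<Rightarrow> complex" where
  "basis_vec x = (\<lambda>y. if y = x then 1 else 0)"

definition adj :: "('a \<times> 'a) set \<Rightarrow> 'a \<Rightarrow> 'a \<Rightarrow> complex" where
  "adj S = (\<lambda>y z. if (y, z) \<in> S then 1 else 0)"

definition dual_idem :: "(nat \<Rightarrow> ('a \<times> 'a) set) \<Rightarrow> 'a \<Rightarrow> nat \<Rightarrow> 'a \<Rightarrow> 'a \<Rightarrow> complex" where
  "dual_idem R x i = (\<lambda>y z. if y = z then adj (R i) x y else 0)"

definition symmetric_association_scheme :: "(nat \<Rightarrow> ('a::finite \<times> 'a) set) \<Rightarrow> nat \<Rightarrow> bool" where
  "symmetric_association_scheme R D \<longleftrightarrow>
     R 0 = Id \<and>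
     (\<forall>i\<le>D. R i \<noteq> {}) \<and>
     (\<forall>y z. \<exists>!i. i \<le> D \<and> (y, z) \<in> R i) \<and>
     (\<forall>i\<le>D. (R i)\<inverse> = R i) \<and>
     (\<forall>i\<le>D. \<forall>j\<le>D. \<forall>k\<le>D. \<exists>p::nat. \<forall>y z. (y, z) \<in> R k \<longrightarrow>
         card {w. (y, w) \<in> R i \<and> (w, z) \<in> R j} = p)"

text \<open>Metric: R i is the distance-i relation of the graph (X, R 1).\<close>
definition metric_scheme :: "(nat \<Rightarrow> ('a \<times> 'a) set) \<Rightarrow> nat \<Rightarrow> bool" where
  "metric_scheme R D \<longleftrightarrow>
     (\<forall>i\<le>D. \<forall>y z. (y, z) \<in> R i \<longleftrightarrow>
        ((y, z) \<in> (R 1) ^^ i \<and> (\<forall>j<i. (y, z) \<notin> (R 1) ^^ j)))"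

inductive_set terwilliger_algebra ::
  "(nat \<Rightarrow> ('a::finite \<times> 'a) set) \<Rightarrow> nat \<Rightarrow> 'a \<Rightarrow> ('a \<Rightarrow> 'a \<Rightarrow> complex) set"
  for R D x where
  gen_A: "i \<le> D \<Longrightarrow> adj (R i) \<in> terwilliger_algebra R D x"
| gen_Estar: "i \<le> D \<Longrightarrow> dual_idem R x i \<in> terwilliger_algebra R D x"
| add: "F \<in> terwilliger_algebra R D x \<Longrightarrow> G \<in> terwilliger_algebra R D x \<Longrightarrow>
        (\<lambda>y z. F y z + G y z) \<in> terwilliger_algebra R D x"
| smult: "F \<in> terwilliger_algebra R D x \<Longrightarrow> (\<lambda>y z. c * F y z) \<in> terwilliger_algebra R D x"
| mult: "F \<in> terwilliger_algebra R D x \<Longrightarrow> G \<in> terwilliger_algebra R D x \<Longrightarrow>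
        mmult F G \<in> terwilliger_algebra R D x"

definition csubspace :: "('a \<Rightarrow> complex) set \<Rightarrow> bool" where
  "csubspace W \<longleftrightarrow> (\<lambda>_. 0) \<in> W \<and> (\<forall>u\<in>W. \<forall>v\<in>W. (\<lambda>y. u y + v y) \<in> W) \<and>
     (\<forall>c. \<forall>u\<in>W. (\<lambda>y. c * u y) \<in> W)"

definition T_module :: "(nat \<Rightarrow> ('a::finite \<times> 'a) set) \<Rightarrow> nat \<Rightarrow> 'a \<Rightarrow> ('a \<Rightarrow> complex) set \<Rightarrow> bool" where
  "T_module R D x W \<longleftrightarrow> csubspace W \<and>
     (\<forall>F\<in>terwilliger_algebra R D x. \<forall>w\<in>W. mvmult F w \<in> W)"

definition irreducible_T_module :: "(nat \<Rightarrow> ('a::finite \<times> 'a) set) \<Rightarrow> nat \<Rightarrow> 'a \<Rightarrow> ('a \<Rightarrow> complex) set \<Rightarrow> bool" where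
  "irreducible_T_module R D x W \<longleftrightarrow> T_module R D x W \<and> W \<noteq> {\<lambda>_. 0} \<and>
     (\<forall>U. T_module R D x U \<and> U \<subseteq> W \<longrightarrow> U = {\<lambda>_. 0} \<or> U = W)"

definition endpoint :: "(nat \<Rightarrow> ('a::finite \<times> 'a) set) \<Rightarrow> nat \<Rightarrow> 'a \<Rightarrow> ('a \<Rightarrow> complex) set \<Rightarrow> nat" where
  "endpoint R D x W = (LEAST i. i \<le> D \<and> (\<exists>w\<in>W. mvmult (dual_idem R x i) w \<noteq> (\<lambda>_. 0)))"

text \<open>Thin: dim E_i^*(x) W \<le> 1, i.e. E_i^*(x) W lies in the span of a single vector.\<close>
definition thin :: "(nat \<Rightarrow> ('a::finite \<times> 'a) set) \<Rightarrow> nat \<Rightarrow> 'a \<Rightarrow> ('a \<Rightarrow> complex) set \<Rightarrow> bool" where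
  "thin R D x W \<longleftrightarrow> (\<forall>i\<le>D. \<exists>v. \<forall>w\<in>W. \<exists>c. mvmult (dual_idem R x i) w = (\<lambda>y. c * v y))"

definition orthogonal_to :: "('a::finite \<Rightarrow> complex) \<Rightarrow> ('a \<Rightarrow> complex) set \<Rightarrow> bool" where
  "orthogonal_to chi W \<longleftrightarrow> (\<forall>w\<in>W. (\<Sum>y\<in>UNIV. w y * cnj (chi y)) = 0)"

definition lin_dependent2 :: "('a \<Rightarrow> complex) \<Rightarrow> ('a \<Rightarrow> complex) \<Rightarrow> bool" where
  "lin_dependent2 u v \<longleftrightarrow> (\<exists>a b. (a \<noteq> 0 \<or> b \<noteq> 0) \<and> (\<forall>y. a * u y + b * v y = 0))"

definition relative_codesign :: "(nat \<Rightarrow> ('a::finite \<times> 'a) set) \<Rightarrow> 'a \<Rightarrow> nat \<Rightarrow> ('a \<Rightarrow> complex) \<Rightarrow> bool" where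
  "relative_codesign R x t \<psi> \<longleftrightarrow>
     (\<forall>i. 1 \<le> i \<and> i \<le> t \<longrightarrow>
        lin_dependent2 (mvmult (dual_idem R x i) \<psi>) (mvmult (adj (R i)) (basis_vec x)))"

end

theory Submission
  imports Defs "HOL-Analysis.Analysis"
begin


definition cip :: "('a::finite \<Rightarrow> complex) \<Rightarrow> ('a \<Rightarrow> complex) \<Rightarrow> complex" where
  "cip u v = (\<Sum>y\<in>UNIV. u y * cnj (v y))"

definition cadj :: "('a \<Rightarrow> 'a \<Rightarrow> complex) \<Rightarrow> 'a \<Rightarrow> 'a \<Rightarrow> complex" where
  "cadj F = (\<lambda>y z. cnj (F z y))"

lemma mvmult_mmult: "mvmult (mmult F G) v = mvmult F (mvmult G v)"
proof (rule ext)
  fix y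
  have "mvmult (mmult F G) v y = (\<Sum>z\<in>UNIV. \<Sum>w\<in>UNIV. F y w * G w z * v z)"
    unfolding mvmult_def mmult_def by (simp add: sum_distrib_right)
  also have "\<dots> = (\<Sum>w\<in>UNIV. \<Sum>z\<in>UNIV. F y w * G w z * v z)" by (rule sum.swap)
  also have "\<dots> = mvmult F (mvmult G v) y"
    unfolding mvmult_def by (simp add: sum_distrib_left mult.assoc)
  finally show "mvmult (mmult F G) v y = mvmult F (mvmult G v) y" .
qed

lemma cip_mvmult: "cip (mvmult F u) v = cip u (mvmult (cadj F) v)"
proof -
  have "cip (mvmult F u) v = (\<Sum>y\<in>UNIV. \<Sum>z\<in>UNIV. F y z * u z * cnj (v y))"
    unfolding cip_def mvmult_def by (simp add: sum_distrib_right)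
  also have "\<dots> = (\<Sum>z\<in>UNIV. \<Sum>y\<in>UNIV. F y z * u z * cnj (v y))" by (rule sum.swap)
  also have "\<dots> = cip u (mvmult (cadj F) v)"
    unfolding cip_def mvmult_def cadj_def by (simp add: sum_distrib_left mult_ac)
  finally show ?thesis .
qed

lemma cadj_mmult: "cadj (mmult F G) = mmult (cadj G) (cadj F)"
  unfolding cadj_def mmult_def by (auto simp: mult.commute intro!: ext)

lemma mvmult_add_vec: "mvmult F (\<lambda>y. u y + v y) = (\<lambda>y. mvmult F u y + mvmult F v y)"
  unfolding mvmult_def by (auto simp: distrib_left sum.distrib)

lemma mvmult_smult_vec: "mvmult F (\<lambda>y. c * u y) = (\<lambda>y. c * mvmult F u y)"
  unfolding mvmult_def by (auto simp: sum_distrib_left mult_ac)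

lemma mvmult_zero_vec: "mvmult F (\<lambda>_. 0) = (\<lambda>_. 0)"
  unfolding mvmult_def by auto

lemma mvmult_add_mat: "mvmult (\<lambda>y z. F y z + G y z) v = (\<lambda>y. mvmult F v y + mvmult G v y)"
  unfolding mvmult_def by (auto simp: distrib_right sum.distrib)

lemma mvmult_smult_mat: "mvmult (\<lambda>y z. c * F y z) v = (\<lambda>y. c * mvmult F v y)"
  unfolding mvmult_def by (auto simp: sum_distrib_left mult_ac)

lemma mvmult_sum_vec: "mvmult F (\<lambda>y. \<Sum>k\<in>I. f k y) = (\<lambda>y. \<Sum>k\<in>I. mvmult F (f k) y)"
proof (rule ext)
  fix y
  have "mvmult F (\<lambda>y. \<Sum>k\<in>I. f k y) y = (\<Sum>z\<in>UNIV. \<Sum>k\<in>I. F y z * f k z)"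
    unfolding mvmult_def by (simp add: sum_distrib_left)
  also have "\<dots> = (\<Sum>k\<in>I. \<Sum>z\<in>UNIV. F y z * f k z)" by (rule sum.swap)
  finally show "mvmult F (\<lambda>y. \<Sum>k\<in>I. f k y) y = (\<Sum>k\<in>I. mvmult F (f k) y)"
    unfolding mvmult_def .
qed

lemma cip_add_left: "cip (\<lambda>y. u y + v y) w = cip u w + cip v w"
  unfolding cip_def by (simp add: distrib_right sum.distrib)
lemma cip_smult_left: "cip (\<lambda>y. c * u y) w = c * cip u w"
  unfolding cip_def by (simp add: sum_distrib_left mult_ac)
lemma cip_smult_right: "cip u (\<lambda>y. c * w y) = cnj c * cip u w"
  unfolding cip_def by (simp add: sum_distrib_left mult_ac)
lemma cip_add_right: "cip u (\<lambda>y. v y + w y) = cip u v + cip u w"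
  unfolding cip_def by (simp add: distrib_left sum.distrib)
lemma cip_sum_left: "cip (\<lambda>y. \<Sum>k\<in>I. f k y) w = (\<Sum>k\<in>I. cip (f k) w)"
proof -
  have "cip (\<lambda>y. \<Sum>k\<in>I. f k y) w = (\<Sum>y\<in>UNIV. \<Sum>k\<in>I. f k y * cnj (w y))"
    unfolding cip_def by (simp add: sum_distrib_right)
  also have "\<dots> = (\<Sum>k\<in>I. \<Sum>y\<in>UNIV. f k y * cnj (w y))" by (rule sum.swap)
  finally show ?thesis unfolding cip_def .
qed
lemma cip_zero_left: "cip (\<lambda>_. 0) w = 0"
  unfolding cip_def by simp
lemma cip_self_eq_0: "cip u u = 0 \<longleftrightarrow> u = (\<lambda>_. 0)"
proof
  assume h: "cip u u = 0"
  have e: "\<And>y. u y * cnj (u y) = complex_of_real ((cmod (u y))\<^sup>2)"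
    by (rule complex_norm_square[symmetric])
  have "complex_of_real (\<Sum>y\<in>UNIV. (cmod (u y))\<^sup>2) = 0"
    using h unfolding cip_def e of_real_sum .
  then have "(\<Sum>y\<in>UNIV. (cmod (u y))\<^sup>2) = 0"
    by (simp only: of_real_eq_0_iff)
  then have "\<forall>y\<in>UNIV. (cmod (u y))\<^sup>2 = 0"
    using sum_nonneg_eq_0_iff[of UNIV "\<lambda>y. (cmod (u y))\<^sup>2"] by simp
  then show "u = (\<lambda>_. 0)" by auto
qed (simp add: cip_def)

lemma csubspace_zero: "csubspace U \<Longrightarrow> (\<lambda>_. 0) \<in> U"
  unfolding csubspace_def by (elim conjE)
lemma csubspace_add: assumes "csubspace U" "u \<in> U" "v \<in> U" shows "(\<lambda>y. u y + v y) \<in> U"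
proof -
  have h: "\<forall>u\<in>U. \<forall>v\<in>U. (\<lambda>y. u y + v y) \<in> U" using assms(1) unfolding csubspace_def by (elim conjE)
  show ?thesis using bspec[OF bspec[OF h assms(2)] assms(3)] .
qed
lemma csubspace_smult: assumes "csubspace U" "u \<in> U" shows "(\<lambda>y. c * u y) \<in> U"
proof -
  have h: "\<forall>c. \<forall>u\<in>U. (\<lambda>y. c * u y) \<in> U" using assms(1) unfolding csubspace_def by (elim conjE)
  show ?thesis using bspec[OF spec[OF h] assms(2)] .
qed

lemma csubspace_sum:
  assumes "csubspace U" "finite I" "\<And>k. k \<in> I \<Longrightarrow> f k \<in> U"
  shows "(\<lambda>y. \<Sum>k\<in>I. f k y) \<in> U"
  using assms(2,3)
proof (induction I rule: finite_induct)
  case empty then show ?case using csubspace_zero[OF assms(1)] by simp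
next
  case (insert a I)
  then have "(\<lambda>y. f a y + (\<Sum>k\<in>I. f k y)) \<in> U"
    using csubspace_add[OF assms(1), of "f a" "\<lambda>y. \<Sum>k\<in>I. f k y"] by simp
  then show ?case using insert by simp
qed

lemma csubspace_diff:
  assumes "csubspace U" "u \<in> U" "v \<in> U" shows "(\<lambda>y. u y - v y) \<in> U"
proof -
  have m: "(\<lambda>y. (-1) * v y) \<in> U" using csubspace_smult[OF assms(1,3)] .
  have "(\<lambda>y. u y + (-1) * v y) \<in> U" using csubspace_add[OF assms(1,2) m] by simp
  then show ?thesis by simp
qed


lemma mvmult_sum_mat: "mvmult (\<lambda>y z. \<Sum>k\<in>I. f k y z) v = (\<lambda>y. \<Sum>k\<in>I. mvmult (f k) v y)"
proof (rule ext)
  fix y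
  have "mvmult (\<lambda>y z. \<Sum>k\<in>I. f k y z) v y = (\<Sum>z\<in>UNIV. \<Sum>k\<in>I. f k y z * v z)"
    unfolding mvmult_def by (simp add: sum_distrib_right)
  also have "\<dots> = (\<Sum>k\<in>I. \<Sum>z\<in>UNIV. f k y z * v z)" by (rule sum.swap)
  finally show "mvmult (\<lambda>y z. \<Sum>k\<in>I. f k y z) v y = (\<Sum>k\<in>I. mvmult (f k) v y)"
    unfolding mvmult_def .
qed

locale ctx =
  fixes R :: "nat \<Rightarrow> ('a::finite \<times> 'a) set" and D :: nat and x :: 'a
  assumes sch: "symmetric_association_scheme R D" and met: "metric_scheme R D"
    and D1: "1 \<le> D"
begin

abbreviation "TT \<equiv> terwilliger_algebra R D x"
abbreviation "Es i u \<equiv> mvmult (dual_idem R x i) u"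

lemmas schD = sch[unfolded symmetric_association_scheme_def]
lemma R0: "R 0 = Id" using schD by (rule conjunct1)
lemma Rne: "i \<le> D \<Longrightarrow> R i \<noteq> {}" using schD[THEN conjunct2, THEN conjunct1] by simp
lemma part: "\<exists>!i. i \<le> D \<and> (y, z) \<in> R i"
  using schD[THEN conjunct2, THEN conjunct2, THEN conjunct1] by (elim allE)
lemma symR0: "i \<le> D \<Longrightarrow> (R i)\<inverse> = R i"
  using schD[THEN conjunct2, THEN conjunct2, THEN conjunct2, THEN conjunct1] by simp
lemma symR: "i \<le> D \<Longrightarrow> (y, z) \<in> R i \<longleftrightarrow> (z, y) \<in> R i"
  using symR0 by (metis converse_iff)
lemma inter: "i \<le> D \<Longrightarrow> j \<le> D \<Longrightarrow> k \<le> D \<Longrightarrow> \<exists>p::nat. \<forall>y z. (y, z) \<in> R k \<longrightarrow>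
         card {w. (y, w) \<in> R i \<and> (w, z) \<in> R j} = p"
  using schD[THEN conjunct2, THEN conjunct2, THEN conjunct2, THEN conjunct2] by simp
lemma metI: "i \<le> D \<Longrightarrow> (y, z) \<in> R i \<longleftrightarrow> ((y, z) \<in> (R 1) ^^ i \<and> (\<forall>j<i. (y, z) \<notin> (R 1) ^^ j))"
  using met unfolding metric_scheme_def by simp

definition idx :: "'a \<Rightarrow> 'a \<Rightarrow> nat" where "idx y z = (THE i. i \<le> D \<and> (y, z) \<in> R i)"

lemma idx_prop: "idx y z \<le> D \<and> (y, z) \<in> R (idx y z)"
  unfolding idx_def using theI'[OF part] .

lemma idx_eq: assumes "i \<le> D" shows "(y, z) \<in> R i \<longleftrightarrow> idx y z = i"
proof
  assume h: "(y, z) \<in> R i"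
  show "idx y z = i" unfolding idx_def
    by (rule the1_equality[OF part]) (simp add: assms h)
next
  assume "idx y z = i" then show "(y, z) \<in> R i" using idx_prop[of y z] by simp
qed

lemma idx_sym: "idx y z = idx z y"
proof -
  have "(z, y) \<in> R (idx y z)" using idx_prop[of y z] symR[of "idx y z" y z] by simp
  then show ?thesis using idx_eq[of "idx y z" z y] idx_prop[of y z] by simp
qed

definition lay :: "'a \<Rightarrow> nat" where "lay y = idx x y"

lemma lay_le: "lay y \<le> D" unfolding lay_def using idx_prop by blast

lemma lay_x: "lay x = 0"
  unfolding lay_def using idx_eq[of 0 x x] R0 by simp

lemma lay_0: "lay y = 0 \<longleftrightarrow> y = x"
proof -
  have "lay y = 0 \<longleftrightarrow> (x, y) \<in> R 0" unfolding lay_def using idx_eq[of 0 x y] by simp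
  then show ?thesis using R0 by auto
qed

lemma Es_apply: "i \<le> D \<Longrightarrow> Es i u y = (if lay y = i then u y else 0)"
proof -
  assume i: "i \<le> D"
  have "Es i u y = (\<Sum>z\<in>UNIV. (if y = z then adj (R i) x y else 0) * u z)"
    unfolding mvmult_def dual_idem_def by simp
  also have "\<dots> = (\<Sum>z\<in>UNIV. (if y = z then adj (R i) x y * u z else 0))"
    by (rule sum.cong) auto
  also have "\<dots> = adj (R i) x y * u y" by simp
  finally show ?thesis using idx_eq[OF i, of x y] unfolding adj_def lay_def by simp
qed

lemma eA_apply: "i \<le> D \<Longrightarrow> mvmult (adj (R i)) (basis_vec x) y = (if lay y = i then 1 else 0)"
proof -
  assume i: "i \<le> D"
  have "mvmult (adj (R i)) (basis_vec x) y = (\<Sum>z\<in>UNIV. adj (R i) y z * (if z = x then 1 else 0))"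
    unfolding mvmult_def basis_vec_def by simp
  also have "\<dots> = (\<Sum>z\<in>UNIV. (if z = x then adj (R i) y z else 0))"
    by (rule sum.cong) auto
  also have "\<dots> = adj (R i) y x" by simp
  finally show ?thesis using idx_eq[OF i, of y x] idx_sym[of x y] unfolding adj_def lay_def by simp
qed

lemma A_apply: "mvmult (adj S) u y = (\<Sum>z\<in>UNIV. if (y, z) \<in> S then u z else 0)"
  unfolding mvmult_def adj_def by (rule sum.cong) auto

definition pn :: "nat \<Rightarrow> nat \<Rightarrow> nat \<Rightarrow> nat" where
  "pn k i j = (SOME p. \<forall>y z. (y, z) \<in> R k \<longrightarrow> card {w. (y, w) \<in> R i \<and> (w, z) \<in> R j} = p)"

lemma pn_prop: "i \<le> D \<Longrightarrow> j \<le> D \<Longrightarrow> k \<le> D \<Longrightarrow> (y, z) \<in> R k \<Longrightarrow>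
   card {w. (y, w) \<in> R i \<and> (w, z) \<in> R j} = pn k i j"
proof -
  assume a: "i \<le> D" "j \<le> D" "k \<le> D" "(y, z) \<in> R k"
  have "\<forall>y z. (y, z) \<in> R k \<longrightarrow> card {w. (y, w) \<in> R i \<and> (w, z) \<in> R j} = pn k i j"
    unfolding pn_def by (rule someI_ex[OF inter[OF a(1-3)]])
  then show ?thesis using a(4) by simp
qed

lemma prod_formula:
  assumes "i \<le> D" "j \<le> D"
  shows "mmult (adj (R i)) (adj (R j)) = (\<lambda>y z. \<Sum>k\<le>D. of_nat (pn k i j) * adj (R k) y z)"
proof (intro ext)
  fix y z
  have "mmult (adj (R i)) (adj (R j)) y z = (\<Sum>w\<in>UNIV. if (y, w) \<in> R i \<and> (w, z) \<in> R j then 1 else 0)"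
    unfolding mmult_def adj_def by (rule sum.cong) auto
  also have "\<dots> = of_nat (card {w. (y, w) \<in> R i \<and> (w, z) \<in> R j})"
    by (simp add: sum.If_cases)
  also have "\<dots> = of_nat (pn (idx y z) i j)"
    using pn_prop[OF assms idx_prop[THEN conjunct1] idx_prop[THEN conjunct2]] by simp
  also have "\<dots> = (\<Sum>k\<le>D. of_nat (pn k i j) * adj (R k) y z)"
  proof -
    have "(\<Sum>k\<le>D. of_nat (pn k i j) * adj (R k) y z) = (\<Sum>k\<le>D. if k = idx y z then of_nat (pn k i j) else 0)"
    proof (rule sum.cong)
      fix k assume "k \<in> {..D}"
      then have "adj (R k) y z = (if k = idx y z then 1 else 0)"
        unfolding adj_def using idx_eq[of k y z] by auto
      then show "of_nat (pn k i j) * adj (R k) y z = (if k = idx y z then of_nat (pn k i j) else 0)"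
        by simp
    qed simp
    also have "\<dots> = of_nat (pn (idx y z) i j)" using idx_prop by simp
    finally show ?thesis by simp
  qed
  finally show "mmult (adj (R i)) (adj (R j)) y z = (\<Sum>k\<le>D. of_nat (pn k i j) * adj (R k) y z)" .
qed

end


definition idm :: "'a \<Rightarrow> 'a \<Rightarrow> complex" where "idm = (\<lambda>y z. if y = z then 1 else 0)"

lemma mvmult_idm: "mvmult idm u = u"
proof (rule ext)
  fix y
  have "mvmult idm u y = (\<Sum>z\<in>UNIV. if z = y then u z else 0)"
    unfolding mvmult_def idm_def by (rule sum.cong) auto
  then show "mvmult idm u y = u y" by simp
qed

context ctx begin

lemma T_A: "i \<le> D \<Longrightarrow> adj (R i) \<in> TT" by (rule terwilliger_algebra.gen_A)
lemma T_E: "i \<le> D \<Longrightarrow> dual_idem R x i \<in> TT" by (rule terwilliger_algebra.gen_Estar)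
lemma T_mult: "F \<in> TT \<Longrightarrow> G \<in> TT \<Longrightarrow> mmult F G \<in> TT" by (rule terwilliger_algebra.mult)

lemma idm_T: "idm \<in> TT"
proof -
  have gen: "n \<le> D \<Longrightarrow> (\<lambda>y z. \<Sum>i\<le>n. dual_idem R x i y z) \<in> TT" for n
  proof (induction n)
    case 0 then show ?case using T_E[of 0] by simp
  next
    case (Suc n)
    then have "(\<lambda>y z. (\<Sum>i\<le>n. dual_idem R x i y z) + dual_idem R x (Suc n) y z) \<in> TT"
      by (intro terwilliger_algebra.add T_E) auto
    then show ?case by simp
  qed
  have eqi: "(\<lambda>y z. \<Sum>i\<le>D. dual_idem R x i y z) = idm"
  proof (intro ext)
    fix y z
    have "(\<Sum>i\<le>D. dual_idem R x i y z) = (\<Sum>i\<le>D. if i = lay y then (if y = z then 1 else 0) else 0)"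
    proof (rule sum.cong)
      fix i assume "i \<in> {..D}"
      then show "dual_idem R x i y z = (if i = lay y then (if y = z then 1 else 0) else 0)"
        unfolding dual_idem_def adj_def lay_def using idx_eq[of i x y] by auto
    qed simp
    also have "\<dots> = idm y z" using lay_le[of y] unfolding idm_def by simp
    finally show "(\<Sum>i\<le>D. dual_idem R x i y z) = idm y z" .
  qed
  show ?thesis using gen[of D] unfolding eqi by simp
qed

lemma cadj_T: "F \<in> TT \<Longrightarrow> cadj F \<in> TT"
proof (induction rule: terwilliger_algebra.induct)
  case (gen_A i)
  have "cadj (adj (R i)) = adj (R i)"
    unfolding cadj_def adj_def using symR[OF gen_A] by (auto intro!: ext)
  then show ?case using T_A[OF gen_A] by simp
next
  case (gen_Estar i)
  have "cadj (dual_idem R x i) = dual_idem R x i"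
    unfolding cadj_def dual_idem_def adj_def by (auto intro!: ext)
  then show ?case using T_E[OF gen_Estar] by simp
next
  case (add F G)
  have "cadj (\<lambda>y z. F y z + G y z) = (\<lambda>y z. cadj F y z + cadj G y z)"
    unfolding cadj_def by simp
  then show ?case using terwilliger_algebra.add[OF add.IH] by simp
next
  case (smult F c)
  have "cadj (\<lambda>y z. c * F y z) = (\<lambda>y z. cnj c * cadj F y z)"
    unfolding cadj_def by simp
  then show ?case using terwilliger_algebra.smult[OF smult.IH, of "cnj c"] by simp
next
  case (mult F G)
  then show ?case unfolding cadj_mmult by (intro T_mult)
qed

lemma relpow_R1: "i \<le> D \<Longrightarrow> (y, z) \<in> R i \<Longrightarrow> (y, z) \<in> (R 1) ^^ i"
  using metI[of i y z] by simp

lemma relpow_min: assumes a: "i \<le> D" "(y, z) \<in> R i" "(y, z) \<in> (R 1) ^^ j" shows "i \<le> j"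
proof (rule ccontr)
  have h: "\<forall>j<i. (y, z) \<notin> (R 1) ^^ j" using metI[OF a(1), of y z] a(2) by simp
  assume "\<not> i \<le> j" then have "j < i" by simp
  then show False using h a(3) by simp
qed

lemma idx_relpow: "(y, z) \<in> (R 1) ^^ j \<Longrightarrow> idx y z \<le> j"
  by (rule relpow_min[OF idx_prop[THEN conjunct1] idx_prop[THEN conjunct2]])

lemma tri1: assumes "(y, z) \<in> R 1" shows "idx w y \<le> idx w z + 1"
proof -
  have "(w, z) \<in> (R 1) ^^ (idx w z)" using relpow_R1 idx_prop by blast
  moreover have "(z, y) \<in> R 1" using assms symR[of 1 y z] D1 by simp
  ultimately have "(w, y) \<in> (R 1) ^^ (Suc (idx w z))" by (rule relpow_Suc_I)
  then show ?thesis using idx_relpow by simp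
qed

lemma lay_adj: assumes "(y, z) \<in> R 1" shows "lay y \<le> lay z + 1" "lay z \<le> lay y + 1"
proof -
  show "lay y \<le> lay z + 1" unfolding lay_def by (rule tri1[OF assms])
  have "(z, y) \<in> R 1" using assms symR[of 1 y z] D1 by simp
  then show "lay z \<le> lay y + 1" unfolding lay_def by (rule tri1)
qed

lemma pn_zero: assumes "i \<le> D" "k \<le> D" "i + 1 < k" shows "pn k 1 i = 0"
proof -
  obtain y z where yz: "(y, z) \<in> R k" using Rne[OF assms(2)] by auto
  have e: "{w. (y, w) \<in> R 1 \<and> (w, z) \<in> R i} = {}"
  proof (rule ccontr)
    assume "{w. (y, w) \<in> R 1 \<and> (w, z) \<in> R i} \<noteq> {}"
    then obtain w where w: "(y, w) \<in> R 1" "(w, z) \<in> R i" by auto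
    have "(w, z) \<in> (R 1) ^^ i" using relpow_R1[OF assms(1) w(2)] .
    then have "(y, z) \<in> (R 1) ^^ (Suc i)" using w(1) by (intro relpow_Suc_I2)
    then have "k \<le> Suc i" using relpow_min[OF assms(2) yz] by blast
    then show False using assms(3) by simp
  qed
  have "pn k 1 i = card {w. (y, w) \<in> R 1 \<and> (w, z) \<in> R i}"
    using pn_prop[OF D1 assms(1) assms(2) yz] by simp
  also have "\<dots> = 0" unfolding e by (rule card.empty)
  finally show ?thesis .
qed

lemma pn_pos: assumes "Suc i \<le> D" shows "pn (Suc i) 1 i \<noteq> 0"
proof -
  obtain y z where yz: "(y, z) \<in> R (Suc i)" using Rne[OF assms] by auto
  have "(y, z) \<in> (R 1) ^^ (Suc i)" using relpow_R1[OF assms yz] .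
  from relpow_Suc_D2[OF this] obtain w where w0: "(y, w) \<in> R 1 \<and> (w, z) \<in> (R 1) ^^ i" by (elim exE)
  from w0 have w: "(y, w) \<in> R 1" "(w, z) \<in> (R 1) ^^ i" by simp_all
  have m: "idx w z \<le> i" using idx_relpow[OF w(2)] .
  have "(w, z) \<in> (R 1) ^^ (idx w z)" using relpow_R1 idx_prop by blast
  then have "(y, z) \<in> (R 1) ^^ (Suc (idx w z))" using w(1) by (intro relpow_Suc_I2)
  then have "Suc i \<le> Suc (idx w z)" using relpow_min[OF assms yz] by blast
  then have "idx w z = i" using m by simp
  then have "(w, z) \<in> R i" using idx_prop[of w z] by simp
  then have "w \<in> {w. (y, w) \<in> R 1 \<and> (w, z) \<in> R i}" using w(1) by simp
  then have ne: "{w. (y, w) \<in> R 1 \<and> (w, z) \<in> R i} \<noteq> {}" by blast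
  have c1: "card {w. (y, w) \<in> R 1 \<and> (w, z) \<in> R i} \<noteq> 0"
    using ne by (metis card_gt_0_iff finite not_gr0)
  have c2: "card {w. (y, w) \<in> R 1 \<and> (w, z) \<in> R i} = pn (Suc i) 1 i"
    using pn_prop[OF D1 _ assms yz, of i] assms by simp
  show ?thesis using c1 unfolding c2 .
qed

lemma A0_id: "mvmult (adj (R 0)) u = u"
proof -
  have "adj (R 0) = idm" unfolding adj_def idm_def R0 by (auto intro!: ext)
  then show ?thesis by (simp add: mvmult_idm)
qed

lemma poly_closed:
  assumes U: "csubspace U" and A1: "\<And>u. u \<in> U \<Longrightarrow> mvmult (adj (R 1)) u \<in> U"
  shows "l \<le> D \<Longrightarrow> u \<in> U \<Longrightarrow> mvmult (adj (R l)) u \<in> U"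
proof (induction l arbitrary: u rule: less_induct)
  case (less l)
  show ?case
  proof (cases l)
    case 0 then show ?thesis using less.prems A0_id by simp
  next
    case (Suc i)
    have iD: "i \<le> D" using less.prems Suc by simp
    have IH: "\<And>k v. k \<le> i \<Longrightarrow> v \<in> U \<Longrightarrow> mvmult (adj (R k)) v \<in> U"
      using less.IH less.prems Suc by simp
    define p where "p k = (of_nat (pn k 1 i) :: complex)" for k
    have p0: "p l \<noteq> 0" using pn_pos[of i] less.prems Suc unfolding p_def by simp
    have eq1: "mvmult (adj (R 1)) (mvmult (adj (R i)) u) = (\<lambda>y. \<Sum>k\<le>D. p k * mvmult (adj (R k)) u y)"
      unfolding mvmult_mmult[symmetric] prod_formula[OF D1 iD] mvmult_sum_mat mvmult_smult_mat p_def ..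
    have split: "(\<Sum>k\<le>D. p k * mvmult (adj (R k)) u y) = p l * mvmult (adj (R l)) u y + (\<Sum>k\<le>i. p k * mvmult (adj (R k)) u y)" for y
    proof -
      have "{..D} = {..Suc i} \<union> {Suc (Suc i)..D}" using less.prems Suc by auto
      then have "(\<Sum>k\<le>D. p k * mvmult (adj (R k)) u y) = (\<Sum>k\<le>Suc i. p k * mvmult (adj (R k)) u y) + (\<Sum>k\<in>{Suc (Suc i)..D}. p k * mvmult (adj (R k)) u y)"
        by (simp add: sum.union_disjoint)
      moreover have "(\<Sum>k\<in>{Suc (Suc i)..D}. p k * mvmult (adj (R k)) u y) = 0"
      proof (rule sum.neutral, rule ballI)
        fix k assume "k \<in> {Suc (Suc i)..D}"
        then have "pn k 1 i = 0" using pn_zero[OF iD, of k] by simp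
        then show "p k * mvmult (adj (R k)) u y = 0" unfolding p_def by simp
      qed
      ultimately show ?thesis using Suc by simp
    qed
    define g where "g = (\<lambda>y. mvmult (adj (R 1)) (mvmult (adj (R i)) u) y - (\<Sum>k\<le>i. p k * mvmult (adj (R k)) u y))"
    have g1: "mvmult (adj (R 1)) (mvmult (adj (R i)) u) \<in> U"
      using A1 IH[of i u] less.prems by simp
    have g2: "(\<lambda>y. \<Sum>k\<le>i. p k * mvmult (adj (R k)) u y) \<in> U"
    proof (rule csubspace_sum[OF U])
      fix k assume "k \<in> {..i}"
      then show "(\<lambda>y. p k * mvmult (adj (R k)) u y) \<in> U"
        using csubspace_smult[OF U IH[of k u]] less.prems by simp
    qed simp
    have gU: "(\<lambda>y. inverse (p l) * g y) \<in> U"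
      unfolding g_def by (rule csubspace_smult[OF U csubspace_diff[OF U g1 g2]])
    have "(\<lambda>y. inverse (p l) * g y) = mvmult (adj (R l)) u"
    proof (rule ext)
      fix y
      have "g y = p l * mvmult (adj (R l)) u y" unfolding g_def eq1 split by simp
      then show "inverse (p l) * g y = mvmult (adj (R l)) u y" using p0 by simp
    qed
    then show ?thesis using gU by simp
  qed
qed

lemma T_module_crit:
  assumes U: "csubspace U" and A1: "\<And>u. u \<in> U \<Longrightarrow> mvmult (adj (R 1)) u \<in> U"
    and E: "\<And>i u. i \<le> D \<Longrightarrow> u \<in> U \<Longrightarrow> Es i u \<in> U"
  shows "T_module R D x U"
  unfolding T_module_def
proof (intro conjI U ballI)
  fix F w assume "F \<in> TT" "w \<in> U"
  then show "mvmult F w \<in> U"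
  proof (induction arbitrary: w rule: terwilliger_algebra.induct)
    case (gen_A i) then show ?case using poly_closed[OF U A1, of i w] by simp
  next
    case (gen_Estar i) then show ?case using E[of i w] by simp
  next
    case (add F G) then show ?case unfolding mvmult_add_mat
      using csubspace_add[OF U add.IH(1)[OF add.prems] add.IH(2)[OF add.prems]] by simp
  next
    case (smult F c) then show ?case unfolding mvmult_smult_mat
      using csubspace_smult[OF U smult.IH[OF smult.prems]] by simp
  next
    case (mult F G) then show ?case unfolding mvmult_mmult
      using mult.IH(1)[OF mult.IH(2)[OF mult.prems]] by simp
  qed
qed

end


definition vc :: "('a::finite \<Rightarrow> complex) \<Rightarrow> complex^'a" where "vc u = (\<chi> j. u j)"

lemma vc_nth: "vc u $ j = u j" unfolding vc_def by simp

lemma vc_inj: "inj vc"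
  by (rule injI) (metis ext vc_nth)

lemma inner_vc: "inner (vc u) (vc v) = Re (cip u v)"
  unfolding inner_vec_def cip_def vc_nth inner_complex_def Re_sum by simp

lemma subspace_vc: assumes U: "csubspace U" shows "subspace (vc ` U)"
  unfolding subspace_def
proof (intro conjI ballI allI)
  show "0 \<in> vc ` U"
  proof
    show "0 = vc (\<lambda>_. 0)" by (simp add: vec_eq_iff vc_nth)
  qed (rule csubspace_zero[OF U])
next
  fix a b assume "a \<in> vc ` U" "b \<in> vc ` U"
  then obtain u v where uv: "u \<in> U" "v \<in> U" "a = vc u" "b = vc v" by blast
  show "a + b \<in> vc ` U"
  proof
    show "a + b = vc (\<lambda>y. u y + v y)" using uv by (simp add: vec_eq_iff vc_nth)
  qed (rule csubspace_add[OF U uv(1,2)])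
next
  fix c :: real and a assume "a \<in> vc ` U"
  then obtain u where u: "u \<in> U" "a = vc u" by blast
  show "c *\<^sub>R a \<in> vc ` U"
  proof
    show "c *\<^sub>R a = vc (\<lambda>y. complex_of_real c * u y)"
      unfolding vec_eq_iff vector_scaleR_component using u by (simp add: vc_nth scaleR_conv_of_real)
  qed (rule csubspace_smult[OF U u(1)])
qed

lemma proj_exists:
  assumes U: "csubspace U"
  shows "\<exists>u1 u2. u1 \<in> U \<and> (\<forall>w\<in>U. cip u2 w = 0) \<and> u = (\<lambda>y. u1 y + u2 y)"
proof -
  have sp: "span (vc ` U) = vc ` U" using subspace_vc[OF U] by (rule span_eq_iff[THEN iffD2])
  obtain a b where ab: "a \<in> span (vc ` U)" "\<And>w. w \<in> span (vc ` U) \<Longrightarrow> orthogonal b w" "vc u = a + b"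
    using orthogonal_subspace_decomp_exists[of "vc ` U" "vc u"] by blast
  obtain u1 where u1: "u1 \<in> U" "a = vc u1" using ab(1) unfolding sp by blast
  define u2 where "u2 = (\<lambda>j. b $ j)"
  have b: "b = vc u2" unfolding u2_def vc_def by simp
  have orth: "cip u2 w = 0" if w: "w \<in> U" for w
  proof -
    have "Re (cip u2 w) = 0" using ab(2)[of "vc w"] w unfolding sp b orthogonal_def inner_vc by simp
    moreover have "(\<lambda>y. \<i> * w y) \<in> U" by (rule csubspace_smult[OF U w])
    then have "Re (cip u2 (\<lambda>y. \<i> * w y)) = 0"
      using ab(2)[of "vc (\<lambda>y. \<i> * w y)"] unfolding sp b orthogonal_def inner_vc by simp
    then have "Im (cip u2 w) = 0" unfolding cip_smult_right by simp
    ultimately show ?thesis by (simp add: complex_eq_iff)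
  qed
  have "u = (\<lambda>y. u1 y + u2 y)"
  proof
    fix y
    have "vc u $ y = vc u1 $ y + vc u2 $ y" using ab(3) u1(2) b by simp
    then show "u y = u1 y + u2 y" unfolding vc_nth .
  qed
  then show ?thesis using u1(1) orth by blast
qed

definition cdim :: "('a::finite \<Rightarrow> complex) set \<Rightarrow> nat" where "cdim U = dim (vc ` U)"

lemma cdim_less:
  assumes "csubspace U1" "csubspace U" "U1 \<subset> U"
  shows "cdim U1 < cdim U"
proof -
  have h: "vc ` U1 \<subset> vc ` U"
    using assms(3) inj_image_eq_iff[OF vc_inj] by blast
  have s1: "span (vc ` U1) = vc ` U1" by (rule span_eq_iff[THEN iffD2, OF subspace_vc[OF assms(1)]])
  have s2: "span (vc ` U) = vc ` U" by (rule span_eq_iff[THEN iffD2, OF subspace_vc[OF assms(2)]])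
  have "span (vc ` U1) \<subset> span (vc ` U)" unfolding s1 s2 by (rule h)
  then show ?thesis unfolding cdim_def by (rule dim_psubset)
qed


lemma cip_sum_right: "cip u (\<lambda>y. \<Sum>k\<in>I. f k y) = (\<Sum>k\<in>I. cip u (f k))"
proof -
  have "cip u (\<lambda>y. \<Sum>k\<in>I. f k y) = (\<Sum>y\<in>UNIV. \<Sum>k\<in>I. u y * cnj (f k y))"
    unfolding cip_def by (simp add: sum_distrib_left)
  also have "\<dots> = (\<Sum>k\<in>I. \<Sum>y\<in>UNIV. u y * cnj (f k y))" by (rule sum.swap)
  finally show ?thesis unfolding cip_def .
qed

lemma cip_diff_left: "cip (\<lambda>y. u y - v y) w = cip u w - cip v w"
  unfolding cip_def by (simp add: left_diff_distrib sum_subtractf)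

lemma cadj_cadj: "cadj (cadj F) = F" unfolding cadj_def by simp

lemma mvmult_at: "mvmult G u z = cip u (mvmult (cadj G) (basis_vec z))"
proof -
  have "mvmult (cadj G) (basis_vec z) = (\<lambda>w. cnj (G z w))"
  proof
    fix w
    have "mvmult (cadj G) (basis_vec z) w = (\<Sum>y\<in>UNIV. if y = z then cnj (G y w) else 0)"
      unfolding mvmult_def cadj_def basis_vec_def by (rule sum.cong) auto
    then show "mvmult (cadj G) (basis_vec z) w = cnj (G z w)" by simp
  qed
  note eq = this
  show ?thesis unfolding eq unfolding cip_def mvmult_def by (simp add: mult.commute)
qed

lemma T_module_sub: "T_module R D x W \<Longrightarrow> csubspace W" unfolding T_module_def by (elim conjE)
lemma T_module_mem: assumes "T_module R D x W" "F \<in> terwilliger_algebra R D x" "w \<in> W"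
  shows "mvmult F w \<in> W"
proof -
  have h: "\<forall>F\<in>terwilliger_algebra R D x. \<forall>w\<in>W. mvmult F w \<in> W"
    using assms(1) unfolding T_module_def by (elim conjE)
  show ?thesis using bspec[OF bspec[OF h assms(2)] assms(3)] .
qed

lemma irr_T: "irreducible_T_module R D x W \<Longrightarrow> T_module R D x W"
  unfolding irreducible_T_module_def by (elim conjE)

lemma irr_eq:
  assumes "irreducible_T_module R D x W" "T_module R D x U" "U \<subseteq> W" "u \<in> U" "u \<noteq> (\<lambda>_. 0)"
  shows "U = W"
proof -
  have h: "\<forall>U. T_module R D x U \<and> U \<subseteq> W \<longrightarrow> U = {\<lambda>_. 0} \<or> U = W"
    using assms(1) unfolding irreducible_T_module_def by (elim conjE)
  have "U = {\<lambda>_. 0} \<or> U = W" using h assms(2,3) by simp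
  moreover have "U \<noteq> {\<lambda>_. 0}" using assms(4,5) by auto
  ultimately show ?thesis by simp
qed

lemma irr_nonzero:
  assumes "irreducible_T_module R D x W" shows "\<exists>w\<in>W. w \<noteq> (\<lambda>_. 0)"
proof -
  have "W \<noteq> {\<lambda>_. 0}" using assms unfolding irreducible_T_module_def by (elim conjE)
  moreover have "(\<lambda>_. 0) \<in> W" using csubspace_zero[OF T_module_sub[OF irr_T[OF assms]]] .
  ultimately show ?thesis by auto
qed

context ctx begin

abbreviation "eA i \<equiv> mvmult (adj (R i)) (basis_vec x)"

definition supp_in :: "nat \<Rightarrow> ('a \<Rightarrow> complex) \<Rightarrow> bool" where
  "supp_in r v \<longleftrightarrow> (\<forall>y. lay y \<noteq> r \<longrightarrow> v y = 0)"

lemma supp_Es: "i \<le> D \<Longrightarrow> supp_in i (Es i u)"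
  unfolding supp_in_def using Es_apply by simp

lemma cip_supp: assumes "supp_in r v" "r \<le> D" shows "cip v \<psi> = cip v (Es r \<psi>)"
  unfolding cip_def
proof (rule sum.cong)
  fix y
  show "v y * cnj (\<psi> y) = v y * cnj (Es r \<psi> y)"
    using assms unfolding supp_in_def Es_apply[OF assms(2)] by (cases "lay y = r") auto
qed simp

lemma K:
  assumes "supp_in r v" "r \<le> D" "cip v (eA r) = 0" "lin_dependent2 (Es r \<psi>) (eA r)"
  shows "cip v \<psi> = 0"
proof -
  obtain a b where ab: "a \<noteq> 0 \<or> b \<noteq> 0" "\<And>y. a * Es r \<psi> y + b * eA r y = 0"
    using assms(4) unfolding lin_dependent2_def by blast
  show ?thesis
  proof (cases "a = 0")
    case True
    then have "b \<noteq> 0" using ab by simp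
    then have "\<And>y. eA r y = 0" using ab(2) True by simp
    then have "\<And>y. lay y \<noteq> r" using eA_apply[OF assms(2)] by (metis one_neq_zero)
    then have "v = (\<lambda>_. 0)" using assms(1) unfolding supp_in_def by auto
    then show ?thesis by (simp add: cip_zero_left)
  next
    case False
    define c where "c = - b / a"
    have e: "Es r \<psi> = (\<lambda>y. c * eA r y)"
    proof
      fix y
      have "a * Es r \<psi> y = - b * eA r y" using ab(2)[of y] by (simp add: eq_neg_iff_add_eq_0)
      then show "Es r \<psi> y = c * eA r y" unfolding c_def using False by (simp add: field_simps)
    qed
    have "cip v \<psi> = cip v (Es r \<psi>)" by (rule cip_supp[OF assms(1,2)])
    also have "\<dots> = cnj c * cip v (eA r)" unfolding e by (rule cip_smult_right)
    finally show ?thesis using assms(3) by simp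
  qed
qed

lemma Z1:
  assumes "T_module R D x W" "\<forall>w\<in>W. w x = 0" "v \<in> W" "r \<le> D"
  shows "cip v (eA r) = 0"
proof -
  have "mvmult (adj (R r)) v \<in> W" using T_module_mem[OF assms(1) T_A[OF assms(4)] assms(3)] .
  then have "mvmult (adj (R r)) v x = 0" using assms(2) by blast
  moreover have "mvmult (adj (R r)) v x = cip v (eA r)"
    unfolding cip_def A_apply[of "R r" v x]
  proof (rule sum.cong)
    fix z
    show "(if (x, z) \<in> R r then v z else 0) = v z * cnj (eA r z)"
      using eA_apply[OF assms(4), of z] idx_eq[OF assms(4), of x z] unfolding lay_def by simp
  qed simp
  ultimately show ?thesis by simp
qed

lemma ep_facts:
  assumes "irreducible_T_module R D x W"
  shows "endpoint R D x W \<le> D" "\<exists>w\<in>W. Es (endpoint R D x W) w \<noteq> (\<lambda>_. 0)"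
    "\<And>j w. j < endpoint R D x W \<Longrightarrow> w \<in> W \<Longrightarrow> Es j w = (\<lambda>_. 0)"
proof -
  obtain w where w: "w \<in> W" "w \<noteq> (\<lambda>_. 0)" using irr_nonzero[OF assms] by blast
  then obtain y where y: "w y \<noteq> 0" by auto
  have "Es (lay y) w y = w y" using Es_apply[OF lay_le] by simp
  then have ex: "lay y \<le> D \<and> (\<exists>w\<in>W. Es (lay y) w \<noteq> (\<lambda>_. 0))" using w y lay_le by (metis)
  have "endpoint R D x W \<le> D \<and> (\<exists>w\<in>W. Es (endpoint R D x W) w \<noteq> (\<lambda>_. 0))"
    unfolding endpoint_def by (rule LeastI[of _ "lay y"], rule ex)
  then show "endpoint R D x W \<le> D" "\<exists>w\<in>W. Es (endpoint R D x W) w \<noteq> (\<lambda>_. 0)" by blast+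
  fix j w assume a: "j < endpoint R D x W" "w \<in> W"
  have "\<not> (j \<le> D \<and> (\<exists>w\<in>W. Es j w \<noteq> (\<lambda>_. 0)))"
    using not_less_Least[OF a(1)[unfolded endpoint_def]] .
  moreover have "j \<le> D" using a(1) \<open>endpoint R D x W \<le> D \<and> _\<close> by simp
  ultimately show "Es j w = (\<lambda>_. 0)" using a(2) by blast
qed

lemma ep_ge1_zero:
  assumes "irreducible_T_module R D x W" "1 \<le> endpoint R D x W" "w \<in> W"
  shows "w x = 0"
proof -
  have "Es 0 w = (\<lambda>_. 0)" using ep_facts(3)[OF assms(1), of 0 w] assms(2,3) by simp
  then have "Es 0 w x = 0" by simp
  then show ?thesis using Es_apply[of 0 w x] lay_x by simp
qed

lemma orth_cip: "orthogonal_to chi W \<longleftrightarrow> (\<forall>w\<in>W. cip w chi = 0)"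
  unfolding orthogonal_to_def cip_def ..

lemma partA:
  assumes H: "\<forall>F\<in>TT. relative_codesign R x t (mvmult F chi)" and tD: "t \<le> D"
    and W: "irreducible_T_module R D x W" and r1: "1 \<le> endpoint R D x W" and rt: "endpoint R D x W \<le> t"
  shows "orthogonal_to chi W"
proof -
  define r where "r = endpoint R D x W"
  have TW: "T_module R D x W" using irr_T[OF W] .
  have rD: "r \<le> D" using ep_facts(1)[OF W] unfolding r_def .
  obtain w0 where w0: "w0 \<in> W" "Es r w0 \<noteq> (\<lambda>_. 0)" using ep_facts(2)[OF W] unfolding r_def by blast
  define v where "v = Es r w0"
  have vW: "v \<in> W" unfolding v_def by (rule T_module_mem[OF TW T_E[OF rD] w0(1)])
  have Z: "\<forall>w\<in>W. w x = 0" using ep_ge1_zero[OF W r1] by blast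
  define U where "U = {w\<in>W. \<forall>G\<in>TT. cip (mvmult G w) chi = 0}"
  have csW: "csubspace W" by (rule T_module_sub[OF TW])
  have TU: "T_module R D x U"
    unfolding T_module_def csubspace_def
  proof (intro conjI ballI allI)
    show "(\<lambda>_. 0) \<in> U" unfolding U_def using csubspace_zero[OF csW]
      by (simp add: mvmult_zero_vec cip_zero_left)
  next
    fix u v assume "u \<in> U" "v \<in> U"
    then show "(\<lambda>y. u y + v y) \<in> U" unfolding U_def using csubspace_add[OF csW]
      by (simp add: mvmult_add_vec cip_add_left)
  next
    fix c u assume "u \<in> U"
    then show "(\<lambda>y. c * u y) \<in> U" unfolding U_def using csubspace_smult[OF csW]
      by (simp add: mvmult_smult_vec cip_smult_left)
  next
    fix F u assume F: "F \<in> TT" and u: "u \<in> U"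
    have "mvmult F u \<in> W" using T_module_mem[OF TW F] u unfolding U_def by blast
    moreover have "\<forall>G\<in>TT. cip (mvmult G (mvmult F u)) chi = 0"
    proof
      fix G assume "G \<in> TT"
      then have "mmult G F \<in> TT" using T_mult F by blast
      then show "cip (mvmult G (mvmult F u)) chi = 0" using u unfolding U_def mvmult_mmult[symmetric] by blast
    qed
    ultimately show "mvmult F u \<in> U" unfolding U_def by blast
  qed
  have vU: "v \<in> U" unfolding U_def
  proof (intro CollectI conjI ballI vW)
    fix G assume G: "G \<in> TT"
    have "cip (mvmult G v) chi = cip v (mvmult (cadj G) chi)" by (rule cip_mvmult)
    also have "\<dots> = 0"
    proof (rule K)
      show "supp_in r v" unfolding v_def by (rule supp_Es[OF rD])
      show "r \<le> D" by (rule rD)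
      show "cip v (eA r) = 0" by (rule Z1[OF TW Z vW rD])
      have "relative_codesign R x t (mvmult (cadj G) chi)" using H cadj_T[OF G] by blast
      then show "lin_dependent2 (Es r (mvmult (cadj G) chi)) (eA r)"
        unfolding relative_codesign_def using r1 rt unfolding r_def by blast
    qed
    finally show "cip (mvmult G v) chi = 0" .
  qed
  have "U = W" using irr_eq[OF W TU _ vU] w0(2) unfolding U_def v_def by blast
  show ?thesis unfolding orth_cip
  proof
    fix w assume "w \<in> W"
    then have "w \<in> U" using \<open>U = W\<close> by simp
    then have "cip (mvmult idm w) chi = 0" unfolding U_def using idm_T by blast
    then show "cip w chi = 0" by (simp add: mvmult_idm)
  qed
qed

end


context ctx begin

definition LC :: "('a \<Rightarrow> complex) \<Rightarrow> bool" where
  "LC v \<longleftrightarrow> (\<exists>c. \<forall>y. v y = c (lay y))"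

lemma LC_basis: "LC (basis_vec x)"
  unfolding LC_def basis_vec_def
  by (rule exI[of _ "\<lambda>k. if k = 0 then 1 else 0"]) (simp add: lay_0)

lemma LC_A:
  assumes l: "l \<le> D" and c: "\<forall>y. v y = c (lay y)"
  shows "LC (mvmult (adj (R l)) v)"
  unfolding LC_def
proof (intro exI allI)
  fix y
  have "mvmult (adj (R l)) v y = (\<Sum>z\<in>UNIV. if (y, z) \<in> R l then c (lay z) else 0)"
    unfolding A_apply c[rule_format] ..
  also have "\<dots> = (\<Sum>z\<in>UNIV. \<Sum>k\<le>D. if (x, z) \<in> R k \<and> (z, y) \<in> R l then c k else 0)"
  proof (rule sum.cong)
    fix z
    have "(\<Sum>k\<le>D. if (x, z) \<in> R k \<and> (z, y) \<in> R l then c k else 0)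
        = (\<Sum>k\<le>D. if k = lay z then (if (y, z) \<in> R l then c k else 0) else 0)"
    proof (rule sum.cong)
      fix k assume "k \<in> {..D}"
      then have k: "k \<le> D" by simp
      show "(if (x, z) \<in> R k \<and> (z, y) \<in> R l then c k else 0) = (if k = lay z then (if (y, z) \<in> R l then c k else 0) else 0)"
        using idx_eq[OF k, of x z] symR[OF l, of z y] unfolding lay_def by auto
    qed simp
    also have "\<dots> = (if (y, z) \<in> R l then c (lay z) else 0)" using lay_le[of z] by simp
    finally show "(if (y, z) \<in> R l then c (lay z) else 0) = (\<Sum>k\<le>D. if (x, z) \<in> R k \<and> (z, y) \<in> R l then c k else 0)" by simp
  qed simp
  also have "\<dots> = (\<Sum>k\<le>D. \<Sum>z\<in>UNIV. if (x, z) \<in> R k \<and> (z, y) \<in> R l then c k else 0)"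
    by (rule sum.swap)
  also have "\<dots> = (\<Sum>k\<le>D. c k * of_nat (card {z. (x, z) \<in> R k \<and> (z, y) \<in> R l}))"
  proof (rule sum.cong)
    fix k
    show "(\<Sum>z\<in>UNIV. if (x, z) \<in> R k \<and> (z, y) \<in> R l then c k else 0) = c k * of_nat (card {z. (x, z) \<in> R k \<and> (z, y) \<in> R l})"
      by (simp add: sum.If_cases)
  qed simp
  also have "\<dots> = (\<Sum>k\<le>D. c k * of_nat (pn (lay y) k l))"
  proof (rule sum.cong)
    fix k assume "k \<in> {..D}"
    then have k: "k \<le> D" by simp
    have "(x, y) \<in> R (lay y)" unfolding lay_def using idx_prop by blast
    then show "c k * of_nat (card {z. (x, z) \<in> R k \<and> (z, y) \<in> R l}) = c k * of_nat (pn (lay y) k l)"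
      using pn_prop[OF k l lay_le] by simp
  qed simp
  finally show "mvmult (adj (R l)) v y = (\<lambda>j. \<Sum>k\<le>D. c k * of_nat (pn j k l)) (lay y)" by simp
qed

lemma LC_T: "F \<in> TT \<Longrightarrow> LC v \<Longrightarrow> LC (mvmult F v)"
proof (induction arbitrary: v rule: terwilliger_algebra.induct)
  case (gen_A i)
  then obtain c where "\<forall>y. v y = c (lay y)" unfolding LC_def by blast
  then show ?case using LC_A[OF gen_A.hyps] by blast
next
  case (gen_Estar i)
  then obtain c where c: "\<forall>y. v y = c (lay y)" unfolding LC_def by blast
  show ?case unfolding LC_def
  proof (intro exI allI)
    fix y
    show "Es i v y = (\<lambda>k. if k = i then c k else 0) (lay y)"
      using Es_apply[OF gen_Estar.hyps] c by simp
  qed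
next
  case (add F G)
  obtain c1 where c1: "\<forall>y. mvmult F v y = c1 (lay y)" using add.IH(1)[OF add.prems] unfolding LC_def by blast
  obtain c2 where c2: "\<forall>y. mvmult G v y = c2 (lay y)" using add.IH(2)[OF add.prems] unfolding LC_def by blast
  show ?case unfolding LC_def mvmult_add_mat
    by (rule exI[of _ "\<lambda>k. c1 k + c2 k"]) (simp add: c1 c2)
next
  case (smult F c)
  obtain c1 where c1: "\<forall>y. mvmult F v y = c1 (lay y)" using smult.IH[OF smult.prems] unfolding LC_def by blast
  show ?case unfolding LC_def mvmult_smult_mat
    by (rule exI[of _ "\<lambda>k. c * c1 k"]) (simp add: c1)
next
  case (mult F G)
  show ?case unfolding mvmult_mmult by (rule mult.IH(1)[OF mult.IH(2)[OF mult.prems]])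
qed

lemma cip_LC:
  assumes "supp_in i v" "i \<le> D" "cip v (eA i) = 0" "LC s"
  shows "cip v s = 0"
proof -
  obtain c where c: "\<forall>y. s y = c (lay y)" using assms(4) unfolding LC_def by blast
  have "cip v s = (\<Sum>y\<in>UNIV. v y * cnj (c i))"
    unfolding cip_def
  proof (rule sum.cong)
    fix y show "v y * cnj (s y) = v y * cnj (c i)"
      using assms(1) c unfolding supp_in_def by (cases "lay y = i") auto
  qed simp
  also have "\<dots> = (\<Sum>y\<in>UNIV. v y) * cnj (c i)" by (simp add: sum_distrib_right)
  also have "(\<Sum>y\<in>UNIV. v y) = cip v (eA i)"
    unfolding cip_def
  proof (rule sum.cong)
    fix y show "v y = v y * cnj (eA i y)"
      using assms(1) eA_apply[OF assms(2), of y] unfolding supp_in_def by (cases "lay y = i") auto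
  qed simp
  finally show ?thesis using assms(3) by simp
qed

lemma claim:
  assumes H: "\<forall>W. irreducible_T_module R D x W \<and> 1 \<le> endpoint R D x W \<and> endpoint R D x W \<le> t
                 \<longrightarrow> (\<forall>w\<in>W. cip w \<psi> = 0)"
  shows "T_module R D x U \<Longrightarrow> \<forall>w\<in>U. w x = 0 \<Longrightarrow> u \<in> U \<Longrightarrow> \<forall>y. t < lay y \<longrightarrow> u y = 0 \<Longrightarrow> cip u \<psi> = 0"
proof (induction "cdim U" arbitrary: U u rule: less_induct)
  case (less U u)
  note TU = less.prems(1) and U0 = less.prems(2) and uU = less.prems(3) and uhi = less.prems(4)
  have csU: "csubspace U" by (rule T_module_sub[OF TU])
  show ?case
  proof (cases "u = (\<lambda>_. 0)")
    case True then show ?thesis by (simp add: cip_zero_left)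
  next
    case unz: False
    then obtain y0 where y0: "u y0 \<noteq> 0" by auto
    show ?thesis
    proof (cases "irreducible_T_module R D x U")
      case irr: True
      have e0: "\<And>w. w \<in> U \<Longrightarrow> Es 0 w = (\<lambda>_. 0)"
      proof
        fix w y assume "w \<in> U"
        then show "Es 0 w y = 0" using Es_apply[of 0 w y] U0 lay_0 by auto
      qed
      have ep0: "endpoint R D x U \<noteq> 0"
      proof
        assume "endpoint R D x U = 0"
        then show False using ep_facts(2)[OF irr] e0 by auto
      qed
      have ly: "lay y0 \<le> t" using uhi y0 by (meson not_le)
      have "Es (lay y0) u y0 = u y0" using Es_apply[OF lay_le] by simp
      then have "Es (lay y0) u \<noteq> (\<lambda>_. 0)" using y0 by auto
      then have "lay y0 \<le> D \<and> (\<exists>w\<in>U. Es (lay y0) w \<noteq> (\<lambda>_. 0))" using lay_le uU by blast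
      then have "endpoint R D x U \<le> lay y0" unfolding endpoint_def by (rule Least_le)
      then have "irreducible_T_module R D x U \<and> 1 \<le> endpoint R D x U \<and> endpoint R D x U \<le> t"
        using irr ep0 ly by simp
      then show ?thesis using H uU by blast
    next
      case nirr: False
      have "\<exists>U1. T_module R D x U1 \<and> U1 \<subseteq> U \<and> U1 \<noteq> {\<lambda>_. 0} \<and> U1 \<noteq> U"
      proof (rule ccontr)
        assume "\<not> ?thesis"
        then have "\<forall>U1. T_module R D x U1 \<and> U1 \<subseteq> U \<longrightarrow> U1 = {\<lambda>_. 0} \<or> U1 = U" by blast
        moreover have "U \<noteq> {\<lambda>_. 0}" using uU unz by auto
        ultimately have "irreducible_T_module R D x U" unfolding irreducible_T_module_def using TU by blast
        then show False using nirr by simp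
      qed
      then obtain U1 where U1: "T_module R D x U1" "U1 \<subseteq> U" "U1 \<noteq> {\<lambda>_. 0}" "U1 \<noteq> U" by blast
      have csU1: "csubspace U1" by (rule T_module_sub[OF U1(1)])
      obtain w1 where w1: "w1 \<in> U1" "w1 \<noteq> (\<lambda>_. 0)" using U1(3) csubspace_zero[OF csU1] by blast
      obtain u1 u2 where uu: "u1 \<in> U1" "\<forall>w\<in>U1. cip u2 w = 0" "u = (\<lambda>y. u1 y + u2 y)"
        using proj_exists[OF csU1] by blast
      define U2 where "U2 = {w\<in>U. \<forall>w1\<in>U1. cip w w1 = 0}"
      have u2eq: "u2 = (\<lambda>y. u y - u1 y)" using uu(3) by auto
      have u2U: "u2 \<in> U" unfolding u2eq by (rule csubspace_diff[OF csU uU]) (use uu(1) U1(2) in blast)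
      have u2U2: "u2 \<in> U2" unfolding U2_def using u2U uu(2) by blast
      have csU2: "csubspace U2" unfolding csubspace_def
      proof (intro conjI)
        show "(\<lambda>_. 0) \<in> U2" unfolding U2_def using csubspace_zero[OF csU] by (simp add: cip_zero_left)
        show "\<forall>a\<in>U2. \<forall>b\<in>U2. (\<lambda>y. a y + b y) \<in> U2"
          unfolding U2_def using csubspace_add[OF csU] by (simp add: cip_add_left)
        show "\<forall>c. \<forall>a\<in>U2. (\<lambda>y. c * a y) \<in> U2"
          unfolding U2_def using csubspace_smult[OF csU] by (simp add: cip_smult_left)
      qed
      have TU2: "T_module R D x U2" unfolding T_module_def
      proof (intro conjI csU2 ballI)
        fix F w assume F: "F \<in> TT" and w: "w \<in> U2"
        have "mvmult F w \<in> U" using T_module_mem[OF TU F] w unfolding U2_def by blast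
        moreover have "\<forall>w1\<in>U1. cip (mvmult F w) w1 = 0"
        proof
          fix w1 assume "w1 \<in> U1"
          then have "mvmult (cadj F) w1 \<in> U1" by (rule T_module_mem[OF U1(1) cadj_T[OF F]])
          then show "cip (mvmult F w) w1 = 0" unfolding cip_mvmult using w unfolding U2_def by blast
        qed
        ultimately show "mvmult F w \<in> U2" unfolding U2_def by blast
      qed
      have hi: "u1 y = 0 \<and> u2 y = 0" if ty: "t < lay y" for y
      proof -
        define j where "j = lay y"
        have jD: "j \<le> D" unfolding j_def by (rule lay_le)
        have e1: "Es j u1 \<in> U1" by (rule T_module_mem[OF U1(1) T_E[OF jD] uu(1)])
        have e2: "Es j u2 \<in> U2" by (rule T_module_mem[OF TU2 T_E[OF jD] u2U2])
        have sum0: "Es j u1 = (\<lambda>z. (-1) * Es j u2 z)"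
        proof
          fix z
          show "Es j u1 z = (-1) * Es j u2 z"
          proof (cases "lay z = j")
            case True
            then have "u z = 0" using uhi ty unfolding j_def by simp
            then show ?thesis using True Es_apply[OF jD] uu(3) by (simp add: add_eq_0_iff)
          next
            case False then show ?thesis using Es_apply[OF jD] by simp
          qed
        qed
        have "Es j u1 \<in> U2" unfolding sum0 by (rule csubspace_smult[OF csU2 e2])
        then have "cip (Es j u1) (Es j u1) = 0" using e1 unfolding U2_def by blast
        then have "Es j u1 = (\<lambda>_. 0)" by (simp add: cip_self_eq_0)
        then have "Es j u1 y = 0" by simp
        then have "u1 y = 0" using Es_apply[OF jD] unfolding j_def by simp
        moreover have "u y = 0" using uhi ty by simp
        ultimately show ?thesis using uu(3) by (simp add: fun_eq_iff)
      qed
      have "cdim U1 < cdim U" by (rule cdim_less[OF csU1 csU]) (use U1(2,4) in blast)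
      then have c1: "cip u1 \<psi> = 0"
        using less.hyps[OF _ U1(1) _ uu(1)] U0 U1(2) hi by blast
      have U2sub: "U2 \<subset> U"
      proof -
        have "w1 \<in> U" using w1(1) U1(2) by blast
        moreover have "w1 \<notin> U2"
        proof
          assume "w1 \<in> U2"
          then have "cip w1 w1 = 0" using w1(1) unfolding U2_def by blast
          then show False using w1(2) by (simp add: cip_self_eq_0)
        qed
        ultimately show ?thesis unfolding U2_def by blast
      qed
      have "cdim U2 < cdim U" by (rule cdim_less[OF csU2 csU U2sub])
      then have c2: "cip u2 \<psi> = 0"
        using less.hyps[OF _ TU2 _ u2U2] U0 hi unfolding U2_def by blast
      show ?thesis unfolding uu(3) cip_add_left c1 c2 by simp
    qed
  qed
qed

end


context ctx begin

lemma partB: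
  assumes H: "\<forall>W. irreducible_T_module R D x W \<and> 1 \<le> endpoint R D x W \<and> endpoint R D x W \<le> t
               \<longrightarrow> orthogonal_to chi W"
    and tD: "t \<le> D" and F: "F \<in> TT"
  shows "relative_codesign R x t (mvmult F chi)"
proof -
  define \<psi> where "\<psi> = mvmult F chi"
  have H': "\<forall>W. irreducible_T_module R D x W \<and> 1 \<le> endpoint R D x W \<and> endpoint R D x W \<le> t
                 \<longrightarrow> (\<forall>w\<in>W. cip w \<psi> = 0)"
  proof (intro allI impI ballI)
    fix W w assume W: "irreducible_T_module R D x W \<and> 1 \<le> endpoint R D x W \<and> endpoint R D x W \<le> t"
      and w: "w \<in> W"
    have "mvmult (cadj F) w \<in> W" using T_module_mem[OF irr_T cadj_T[OF F] w] W by blast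
    moreover have "orthogonal_to chi W" using H W by blast
    ultimately have "cip (mvmult (cadj F) w) chi = 0" unfolding orth_cip by blast
    then show "cip w \<psi> = 0" unfolding cip_mvmult cadj_cadj \<psi>_def .
  qed
  define U0 where "U0 = {w. \<forall>G\<in>TT. mvmult G w x = 0}"
  have TU0: "T_module R D x U0" unfolding T_module_def
  proof (intro conjI ballI)
    show "csubspace U0" unfolding csubspace_def
    proof (intro conjI)
      show "(\<lambda>_. 0) \<in> U0" unfolding U0_def by (simp add: mvmult_zero_vec)
      show "\<forall>a\<in>U0. \<forall>b\<in>U0. (\<lambda>y. a y + b y) \<in> U0" unfolding U0_def by (simp add: mvmult_add_vec)
      show "\<forall>c. \<forall>a\<in>U0. (\<lambda>y. c * a y) \<in> U0" unfolding U0_def by (simp add: mvmult_smult_vec)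
    qed
  next
    fix G w assume G: "G \<in> TT" and w: "w \<in> U0"
    show "mvmult G w \<in> U0" unfolding U0_def
    proof (intro CollectI ballI)
      fix G' assume "G' \<in> TT"
      then have "mmult G' G \<in> TT" using T_mult G by blast
      then show "mvmult G' (mvmult G w) x = 0" using w unfolding U0_def mvmult_mmult[symmetric] by blast
    qed
  qed
  have U0x: "\<forall>w\<in>U0. w x = 0"
  proof
    fix w assume "w \<in> U0"
    then have "mvmult idm w x = 0" unfolding U0_def using idm_T by blast
    then show "w x = 0" by (simp add: mvmult_idm)
  qed
  show ?thesis unfolding relative_codesign_def \<psi>_def[symmetric]
  proof (intro allI impI)
    fix i assume i: "1 \<le> i \<and> i \<le> t"
    then have iD: "i \<le> D" using tD by simp
    show "lin_dependent2 (Es i \<psi>) (eA i)"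
    proof (cases "eA i = (\<lambda>_. 0)")
      case True
      show ?thesis unfolding lin_dependent2_def
        by (rule exI[of _ 0], rule exI[of _ 1]) (simp add: True)
    next
      case False
      have nz: "cip (eA i) (eA i) \<noteq> 0" using False by (simp add: cip_self_eq_0)
      define c where "c = cip (Es i \<psi>) (eA i) / cip (eA i) (eA i)"
      define u where "u = (\<lambda>y. Es i \<psi> y - c * eA i y)"
      have ue: "cip u (eA i) = 0" unfolding u_def cip_diff_left cip_smult_left c_def using nz by simp
      have us: "supp_in i u" unfolding supp_in_def u_def using Es_apply[OF iD] eA_apply[OF iD] by simp
      have uU0: "u \<in> U0" unfolding U0_def
      proof (intro CollectI ballI)
        fix G assume G: "G \<in> TT"
        have "mvmult G u x = cip u (mvmult (cadj G) (basis_vec x))" by (rule mvmult_at)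
        also have "\<dots> = 0" by (rule cip_LC[OF us iD ue LC_T[OF cadj_T[OF G] LC_basis]])
        finally show "mvmult G u x = 0" .
      qed
      have hi: "\<forall>y. t < lay y \<longrightarrow> u y = 0" using us i unfolding supp_in_def by auto
      have c0: "cip u \<psi> = 0" by (rule claim[OF H' TU0 U0x uU0 hi])
      have esd: "Es i \<psi> = (\<lambda>y. u y + c * eA i y)" unfolding u_def by simp
      have "cip u \<psi> = cip u (Es i \<psi>)" by (rule cip_supp[OF us iD])
      also have "\<dots> = cip u u + cnj c * cip u (eA i)" unfolding esd cip_add_right cip_smult_right ..
      finally have "cip u u = 0" using c0 ue by simp
      then have u0: "u = (\<lambda>_. 0)" by (simp add: cip_self_eq_0)
      show ?thesis unfolding lin_dependent2_def
      proof (rule exI[of _ 1], rule exI[of _ "- c"], intro conjI allI)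
        fix y
        have "u y = 0" using u0 by simp
        then show "1 * Es i \<psi> y + - c * eA i y = 0" unfolding u_def by simp
      qed simp
    qed
  qed
qed

end


context ctx begin

definition pw :: "('a \<Rightarrow> complex) \<Rightarrow> nat \<Rightarrow> 'a \<Rightarrow> complex" where
  "pw f k = ((mvmult (adj (R 1))) ^^ k) f"

lemma pw_0: "pw f 0 = f" unfolding pw_def by simp
lemma pw_Suc: "pw f (Suc k) = mvmult (adj (R 1)) (pw f k)" unfolding pw_def by simp
lemma pw_Suc': "pw (mvmult (adj (R 1)) f) k = pw f (Suc k)"
  unfolding pw_def by (simp only: funpow_Suc_right o_apply)

lemma A1_selfadj: "cadj (adj (R 1)) = adj (R 1)"
  unfolding cadj_def adj_def using symR[of 1] D1 by (auto intro!: ext)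

lemma cip_pw: "cip (pw f k) g = cip f (pw g k)"
proof (induction k arbitrary: g)
  case 0 then show ?case by (simp add: pw_0)
next
  case (Suc k)
  have "cip (pw f (Suc k)) g = cip (pw f k) (mvmult (adj (R 1)) g)"
    unfolding pw_Suc cip_mvmult A1_selfadj ..
  also have "\<dots> = cip f (pw g (Suc k))" unfolding Suc.IH pw_Suc' ..
  finally show ?case .
qed

lemma pw_span: "\<exists>c. pw chi k = (\<lambda>y. \<Sum>l\<le>D. c l * mvmult (adj (R l)) chi y)"
proof (induction k)
  case 0
  have "chi = (\<lambda>y. \<Sum>l\<le>D. (if l = 0 then 1 else 0) * mvmult (adj (R l)) chi y)"
  proof
    fix y
    have "(\<Sum>l\<le>D. (if l = 0 then 1 else 0) * mvmult (adj (R l)) chi y) = (\<Sum>l\<le>D. if l = 0 then mvmult (adj (R l)) chi y else 0)"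
      by (rule sum.cong) simp_all
    also have "\<dots> = mvmult (adj (R 0)) chi y" by simp
    finally have "(\<Sum>l\<le>D. (if l = 0 then 1 else 0) * mvmult (adj (R l)) chi y) = mvmult (adj (R 0)) chi y" .
    then show "chi y = (\<Sum>l\<le>D. (if l = 0 then 1 else 0) * mvmult (adj (R l)) chi y)" by (simp add: A0_id)
  qed
  then show ?case unfolding pw_0 by (rule exI[of _ "\<lambda>l. if l = 0 then 1 else 0"])
next
  case (Suc k)
  then obtain c where c: "pw chi k = (\<lambda>y. \<Sum>l\<le>D. c l * mvmult (adj (R l)) chi y)" by blast
  define c' where "c' m = (\<Sum>l\<le>D. c l * of_nat (pn m 1 l))" for m
  have "pw chi (Suc k) = (\<lambda>y. \<Sum>m\<le>D. c' m * mvmult (adj (R m)) chi y)"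
  proof
    fix y
    have "pw chi (Suc k) y = (\<Sum>l\<le>D. c l * mvmult (adj (R 1)) (mvmult (adj (R l)) chi) y)"
      unfolding pw_Suc c mvmult_sum_vec mvmult_smult_vec ..
    also have "\<dots> = (\<Sum>l\<le>D. c l * (\<Sum>m\<le>D. of_nat (pn m 1 l) * mvmult (adj (R m)) chi y))"
    proof (rule sum.cong)
      fix l assume "l \<in> {..D}"
      then have l: "l \<le> D" by simp
      show "c l * mvmult (adj (R 1)) (mvmult (adj (R l)) chi) y = c l * (\<Sum>m\<le>D. of_nat (pn m 1 l) * mvmult (adj (R m)) chi y)"
        unfolding mvmult_mmult[symmetric] prod_formula[OF D1 l] mvmult_sum_mat mvmult_smult_mat ..
    qed simp
    also have "\<dots> = (\<Sum>l\<le>D. \<Sum>m\<le>D. c l * of_nat (pn m 1 l) * mvmult (adj (R m)) chi y)"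
      by (simp add: sum_distrib_left mult.assoc)
    also have "\<dots> = (\<Sum>m\<le>D. \<Sum>l\<le>D. c l * of_nat (pn m 1 l) * mvmult (adj (R m)) chi y)"
      by (rule sum.swap)
    also have "\<dots> = (\<Sum>m\<le>D. c' m * mvmult (adj (R m)) chi y)"
      unfolding c'_def by (simp add: sum_distrib_right)
    finally show "pw chi (Suc k) y = (\<Sum>m\<le>D. c' m * mvmult (adj (R m)) chi y)" .
  qed
  then show ?case by blast
qed

lemma pw_orth:
  assumes CD: "\<forall>l\<le>D. relative_codesign R x t (mvmult (adj (R l)) chi)"
    and r: "1 \<le> r" "r \<le> t" "r \<le> D" and vs: "supp_in r v" and ve: "cip v (eA r) = 0"
  shows "cip (pw v k) chi = 0"
proof -
  obtain c where c: "pw chi k = (\<lambda>y. \<Sum>l\<le>D. c l * mvmult (adj (R l)) chi y)" using pw_span by blast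
  have "cip (pw v k) chi = cip v (pw chi k)" by (rule cip_pw)
  also have "\<dots> = (\<Sum>l\<le>D. cnj (c l) * cip v (mvmult (adj (R l)) chi))"
    unfolding c cip_sum_right cip_smult_right ..
  also have "\<dots> = 0"
  proof (rule sum.neutral, rule ballI)
    fix l assume "l \<in> {..D}"
    then have "relative_codesign R x t (mvmult (adj (R l)) chi)" using CD by simp
    then have "lin_dependent2 (Es r (mvmult (adj (R l)) chi)) (eA r)"
      unfolding relative_codesign_def using r by blast
    then have "cip v (mvmult (adj (R l)) chi) = 0" by (rule K[OF vs r(3) ve])
    then show "cnj (c l) * cip v (mvmult (adj (R l)) chi) = 0" by simp
  qed
  finally show ?thesis .
qed

lemma band: "pw f k y \<noteq> 0 \<Longrightarrow> \<exists>z. f z \<noteq> 0 \<and> lay y \<le> lay z + k \<and> lay z \<le> lay y + k"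
proof (induction k arbitrary: y)
  case 0 then show ?case unfolding pw_0 by auto
next
  case (Suc k)
  have "pw f (Suc k) y = (\<Sum>z\<in>UNIV. if (y, z) \<in> R 1 then pw f k z else 0)"
    unfolding pw_Suc A_apply ..
  note eq = this
  have "\<exists>z. (y, z) \<in> R 1 \<and> pw f k z \<noteq> 0"
  proof (rule ccontr)
    assume a: "\<not> (\<exists>z. (y, z) \<in> R 1 \<and> pw f k z \<noteq> 0)"
    have "\<forall>z\<in>UNIV. (if (y, z) \<in> R 1 then pw f k z else 0) = 0"
    proof
      fix z show "(if (y, z) \<in> R 1 then pw f k z else 0) = 0" using a by (cases "(y, z) \<in> R 1") auto
    qed
    then have "pw f (Suc k) y = 0" unfolding eq by (rule sum.neutral)
    then show False using Suc.prems by simp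
  qed
  then obtain z where z: "(y, z) \<in> R 1" "pw f k z \<noteq> 0" by blast
  obtain z' where z': "f z' \<noteq> 0" "lay z \<le> lay z' + k" "lay z' \<le> lay z + k" using Suc.IH[OF z(2)] by blast
  have "lay y \<le> lay z + 1" "lay z \<le> lay y + 1" using lay_adj[OF z(1)] by simp_all
  then show ?case using z' by (intro exI[of _ z']) simp
qed

lemma decomp:
  assumes "\<forall>y. p y \<noteq> 0 \<longrightarrow> r \<le> lay y \<and> lay y \<le> r + M" "r + M \<le> D"
  shows "p = (\<lambda>y. \<Sum>m\<le>M. Es (r + m) p y)"
proof
  fix y
  have "(\<Sum>m\<le>M. Es (r + m) p y) = (\<Sum>m\<le>M. if m = lay y - r then p y else 0)"
  proof (rule sum.cong)
    fix m assume "m \<in> {..M}"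
    then have "r + m \<le> D" using assms(2) by simp
    then show "Es (r + m) p y = (if m = lay y - r then p y else 0)"
      using Es_apply[of "r + m" p y] assms(1) by auto
  qed simp
  also have "\<dots> = p y"
  proof (cases "p y = 0")
    case True then show ?thesis by simp
  next
    case False
    then have "lay y - r \<in> {..M}" using assms(1) by auto
    then show ?thesis by simp
  qed
  finally show "p y = (\<Sum>m\<le>M. Es (r + m) p y)" by simp
qed

end


context ctx begin

lemma partC:
  assumes TH: "thin R D x W"
    and CD: "\<forall>l\<le>D. relative_codesign R x t (mvmult (adj (R l)) chi)"
    and W: "irreducible_T_module R D x W" and r1: "1 \<le> endpoint R D x W" and rt: "endpoint R D x W \<le> t"
  shows "orthogonal_to chi W"
proof -
  define r where "r = endpoint R D x W"
  have TW: "T_module R D x W" using irr_T[OF W] .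
  have csW: "csubspace W" by (rule T_module_sub[OF TW])
  have rD: "r \<le> D" using ep_facts(1)[OF W] unfolding r_def .
  obtain w0 where w0: "w0 \<in> W" "Es r w0 \<noteq> (\<lambda>_. 0)" using ep_facts(2)[OF W] unfolding r_def by blast
  define v where "v = Es r w0"
  have vW: "v \<in> W" unfolding v_def by (rule T_module_mem[OF TW T_E[OF rD] w0(1)])
  have vnz: "v \<noteq> (\<lambda>_. 0)" using w0(2) unfolding v_def .
  have Z: "\<forall>w\<in>W. w x = 0" using ep_ge1_zero[OF W r1] by blast
  have below: "w y = 0" if "w \<in> W" "lay y < r" for w y
  proof -
    have "Es (lay y) w = (\<lambda>_. 0)" using ep_facts(3)[OF W, of "lay y" w] that unfolding r_def by simp
    then have "Es (lay y) w y = 0" by simp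
    then show ?thesis using Es_apply[OF lay_le] by simp
  qed
  have vs: "supp_in r v" unfolding v_def by (rule supp_Es[OF rD])
  have ve: "cip v (eA r) = 0" by (rule Z1[OF TW Z vW rD])
  have pwW: "pw v k \<in> W" for k
  proof (induction k)
    case 0 then show ?case using vW by (simp add: pw_0)
  next
    case (Suc k) then show ?case unfolding pw_Suc by (rule T_module_mem[OF TW T_A[OF D1]])
  qed
  have P0: "cip (pw v k) chi = 0" for k
    by (rule pw_orth[OF CD _ _ rD vs ve]) (use r1 rt in \<open>simp_all add: r_def\<close>)
  have band_v: "lay y \<le> r + k" if nz: "pw v k y \<noteq> 0" for k y
  proof -
    obtain z where z: "v z \<noteq> 0" "lay y \<le> lay z + k" using band[OF nz] by blast
    have "lay z = r" using vs z(1) unfolding supp_in_def by blast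
    then show ?thesis using z(2) by simp
  qed
  define vk where "vk m = Es (r + m) (pw v m)" for m
  define d where "d = (LEAST k. r + k = D \<or> vk (Suc k) = (\<lambda>_. 0))"
  have d_le: "r + d \<le> D"
  proof -
    have "d \<le> D - r" unfolding d_def by (rule Least_le) (use rD in simp)
    then show ?thesis using rD by simp
  qed
  have d_end: "vk (Suc d) = (\<lambda>_. 0)" if "r + d < D"
  proof -
    have "r + d = D \<or> vk (Suc d) = (\<lambda>_. 0)" unfolding d_def
      by (rule LeastI[of _ "D - r"]) (use rD in simp)
    then show ?thesis using that by simp
  qed
  have d_nz: "vk m \<noteq> (\<lambda>_. 0)" if "m \<le> d" for m
    using that
  proof (induction m)
    case 0 then show ?case unfolding vk_def pw_0 using vnz Es_apply[OF rD] vs unfolding supp_in_def v_def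
      by (metis (no_types, lifting) add_0_right)
  next
    case (Suc m)
    then have "m < d" by simp
    then have "\<not> (r + m = D \<or> vk (Suc m) = (\<lambda>_. 0))" unfolding d_def by (rule not_less_Least)
    then show ?case by simp
  qed
  have vkW: "vk m \<in> W" if "r + m \<le> D" for m
    unfolding vk_def by (rule T_module_mem[OF TW T_E[OF that] pwW])
  have thin_vk: "\<exists>\<alpha>. Es (r + m) w = (\<lambda>y. \<alpha> * vk m y)" if m: "m \<le> d" and w: "w \<in> W" for m w
  proof -
    have iD: "r + m \<le> D" using m d_le by simp
    obtain b where b: "\<forall>w\<in>W. \<exists>c. Es (r + m) w = (\<lambda>y. c * b y)"
      using TH iD unfolding thin_def by blast
    have "vk m \<in> W" by (rule vkW[OF iD])
    then have "Es (r + m) (vk m) = vk m" unfolding vk_def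
      using Es_apply[OF iD] by (auto intro!: ext)
    moreover obtain c0 where c0: "Es (r + m) (vk m) = (\<lambda>y. c0 * b y)" using b \<open>vk m \<in> W\<close> by blast
    ultimately have vkb: "vk m = (\<lambda>y. c0 * b y)" by simp
    have c0nz: "c0 \<noteq> 0" using d_nz[OF m] vkb by auto
    obtain c where c: "Es (r + m) w = (\<lambda>y. c * b y)" using b w by blast
    show ?thesis
    proof (rule exI[of _ "c / c0"])
      show "Es (r + m) w = (\<lambda>y. c / c0 * vk m y)" unfolding c vkb using c0nz by (auto intro!: ext)
    qed
  qed
  define W2 where "W2 = {w\<in>W. \<forall>y. r + d < lay y \<longrightarrow> w y = 0}"
  have csW2: "csubspace W2" unfolding csubspace_def
  proof (intro conjI)
    show "(\<lambda>_. 0) \<in> W2" unfolding W2_def using csubspace_zero[OF csW] by simp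
    show "\<forall>a\<in>W2. \<forall>b\<in>W2. (\<lambda>y. a y + b y) \<in> W2"
      unfolding W2_def using csubspace_add[OF csW] by simp
    show "\<forall>c. \<forall>a\<in>W2. (\<lambda>y. c * a y) \<in> W2"
      unfolding W2_def using csubspace_smult[OF csW] by simp
  qed
  have TW2: "T_module R D x W2"
  proof (rule T_module_crit[OF csW2])
    fix i u assume i: "i \<le> D" and u: "u \<in> W2"
    have "Es i u \<in> W" using T_module_mem[OF TW T_E[OF i]] u unfolding W2_def by blast
    moreover have "\<forall>y. r + d < lay y \<longrightarrow> Es i u y = 0" using u Es_apply[OF i] unfolding W2_def by simp
    ultimately show "Es i u \<in> W2" unfolding W2_def by blast
  next
    fix w assume w: "w \<in> W2"
    have wW: "w \<in> W" and wz: "\<And>y. r + d < lay y \<Longrightarrow> w y = 0" using w unfolding W2_def by blast+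
    have "mvmult (adj (R 1)) w \<in> W" by (rule T_module_mem[OF TW T_A[OF D1] wW])
    moreover have "mvmult (adj (R 1)) w y = 0" if ly: "r + d < lay y" for y
    proof (cases "r + d + 1 < lay y")
      case True
      have "mvmult (adj (R 1)) w y = (\<Sum>z\<in>UNIV. if (y, z) \<in> R 1 then w z else 0)" by (rule A_apply)
      also have "\<dots> = 0"
      proof (rule sum.neutral, rule ballI)
        fix z
        show "(if (y, z) \<in> R 1 then w z else 0) = 0"
        proof (cases "(y, z) \<in> R 1")
          case True
          then have "lay y \<le> lay z + 1" by (rule lay_adj)
          then have "r + d < lay z" using \<open>r + d + 1 < lay y\<close> by simp
          then show ?thesis using wz True by simp
        qed simp
      qed
      finally show ?thesis .
    next
      case False
      then have lyd: "lay y = r + Suc d" using ly by simp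
      have rdD: "r + d < D" using lay_le[of y] lyd by simp
      obtain \<alpha> where \<alpha>: "Es (r + d) w = (\<lambda>y. \<alpha> * vk d y)" using thin_vk[OF le_refl wW] by blast
      have "mvmult (adj (R 1)) w y = (\<Sum>z\<in>UNIV. if (y, z) \<in> R 1 then w z else 0)" by (rule A_apply)
      also have "\<dots> = (\<Sum>z\<in>UNIV. \<alpha> * (if (y, z) \<in> R 1 then pw v d z else 0))"
      proof (rule sum.cong)
        fix z
        show "(if (y, z) \<in> R 1 then w z else 0) = \<alpha> * (if (y, z) \<in> R 1 then pw v d z else 0)"
        proof (cases "(y, z) \<in> R 1")
          case True
          then have lz: "r + d \<le> lay z" using lay_adj[OF True] lyd by simp
          show ?thesis
          proof (cases "lay z = r + d")
            case True
            have "w z = Es (r + d) w z" using Es_apply[of "r + d" w z] d_le True by simp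
            also have "\<dots> = \<alpha> * vk d z" using \<alpha> by simp
            also have "vk d z = pw v d z" unfolding vk_def using Es_apply[of "r + d" "pw v d" z] d_le True by simp
            finally show ?thesis using \<open>(y, z) \<in> R 1\<close> by simp
          next
            case False
            then have "r + d < lay z" using lz by simp
            then have "w z = 0" "pw v d z = 0" using wz band_v[of d z] by (simp, linarith)
            then show ?thesis by simp
          qed
        qed simp
      qed simp
      also have "\<dots> = \<alpha> * pw v (Suc d) y" unfolding pw_Suc A_apply by (simp add: sum_distrib_left)
      also have "pw v (Suc d) y = vk (Suc d) y"
        unfolding vk_def using Es_apply[of "r + Suc d" "pw v (Suc d)" y] rdD lyd by simp
      also have "\<dots> = 0" using d_end[OF rdD] by simp
      finally show ?thesis by simp
    qed
    ultimately show "mvmult (adj (R 1)) w \<in> W2" unfolding W2_def by blast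
  qed
  have vW2: "v \<in> W2" unfolding W2_def using vW vs unfolding supp_in_def by auto
  have W2W: "W2 = W" by (rule irr_eq[OF W TW2 _ vW2 vnz]) (auto simp: W2_def)
  have Wtop: "\<And>w y. w \<in> W \<Longrightarrow> r + d < lay y \<Longrightarrow> w y = 0" using W2W unfolding W2_def by blast
  define Sp where "Sp = {w. \<exists>c. w = (\<lambda>y. \<Sum>k\<le>D. c k * pw v k y)}"
  have csSp: "csubspace Sp" unfolding csubspace_def
  proof (intro conjI)
    show "(\<lambda>_. 0) \<in> Sp" unfolding Sp_def by (rule CollectI, rule exI[of _ "\<lambda>_. 0"]) simp
    show "\<forall>a\<in>Sp. \<forall>b\<in>Sp. (\<lambda>y. a y + b y) \<in> Sp"
    proof (intro ballI)
      fix a b assume "a \<in> Sp" "b \<in> Sp"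
      then obtain ca cb where "a = (\<lambda>y. \<Sum>k\<le>D. ca k * pw v k y)" "b = (\<lambda>y. \<Sum>k\<le>D. cb k * pw v k y)"
        unfolding Sp_def by blast
      then show "(\<lambda>y. a y + b y) \<in> Sp" unfolding Sp_def
        by (intro CollectI exI[of _ "\<lambda>k. ca k + cb k"]) (simp add: distrib_right sum.distrib)
    qed
    show "\<forall>c. \<forall>a\<in>Sp. (\<lambda>y. c * a y) \<in> Sp"
    proof (intro ballI allI)
      fix c a assume "a \<in> Sp"
      then obtain ca where "a = (\<lambda>y. \<Sum>k\<le>D. ca k * pw v k y)" unfolding Sp_def by blast
      then show "(\<lambda>y. c * a y) \<in> Sp" unfolding Sp_def
        by (intro CollectI exI[of _ "\<lambda>k. c * ca k"]) (simp add: sum_distrib_left mult.assoc)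
    qed
  qed
  have Sp_orth: "cip w chi = 0" if wS: "w \<in> Sp" for w
  proof -
    obtain c where c: "w = (\<lambda>y. \<Sum>k\<le>D. c k * pw v k y)" using wS unfolding Sp_def by blast
    show ?thesis unfolding c cip_sum_left cip_smult_left P0 by simp
  qed
  have pwSp: "pw v m \<in> Sp" if "m \<le> D" for m
  proof -
    have "pw v m = (\<lambda>y. \<Sum>k\<le>D. (if k = m then 1 else 0) * pw v k y)"
    proof
      fix y
      have "(\<Sum>k\<le>D. (if k = m then 1 else 0) * pw v k y) = (\<Sum>k\<le>D. if k = m then pw v k y else 0)"
        by (rule sum.cong) simp_all
      also have "\<dots> = pw v m y" using that by simp
      finally show "pw v m y = (\<Sum>k\<le>D. (if k = m then 1 else 0) * pw v k y)" by simp
    qed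
    then show ?thesis unfolding Sp_def by (intro CollectI exI[of _ "\<lambda>k. if k = m then 1 else 0"])
  qed
  have vkSp: "vk m \<in> Sp" if "m \<le> d" for m
    using that
  proof (induction m rule: less_induct)
    case (less m)
    have mD: "r + m \<le> D" using less.prems d_le by simp
    have dec: "pw v m = (\<lambda>y. \<Sum>m'\<le>m. Es (r + m') (pw v m) y)"
    proof (rule decomp[OF _ mD], intro allI impI conjI)
      fix y assume "pw v m y \<noteq> 0"
      then show "r \<le> lay y" "lay y \<le> r + m" using below[OF pwW] band_v by (meson not_le)+
    qed
    have split: "pw v m y = vk m y + (\<Sum>m'<m. Es (r + m') (pw v m) y)" for y
    proof -
      have "pw v m y = (\<Sum>m'\<le>m. Es (r + m') (pw v m) y)" using dec by (metis)
      also have "\<dots> = Es (r + m) (pw v m) y + (\<Sum>m'<m. Es (r + m') (pw v m) y)"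
        by (simp add: lessThan_Suc_atMost[symmetric])
      finally show ?thesis unfolding vk_def .
    qed
    have lowSp: "(\<lambda>y. \<Sum>m'<m. Es (r + m') (pw v m) y) \<in> Sp"
    proof (rule csubspace_sum[OF csSp])
      fix m' assume m': "m' \<in> {..<m}"
      then have m'd: "m' \<le> d" using less.prems by simp
      obtain \<alpha> where \<alpha>: "Es (r + m') (pw v m) = (\<lambda>y. \<alpha> * vk m' y)" using thin_vk[OF m'd pwW] by blast
      have "vk m' \<in> Sp" using less.IH[of m'] m' m'd by simp
      then show "Es (r + m') (pw v m) \<in> Sp" unfolding \<alpha> by (rule csubspace_smult[OF csSp])
    qed simp
    have "vk m = (\<lambda>y. pw v m y - (\<Sum>m'<m. Es (r + m') (pw v m) y))"
      using split by (auto intro!: ext simp: algebra_simps)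
    then show ?case using csubspace_diff[OF csSp pwSp lowSp] mD by simp
  qed
  show ?thesis unfolding orth_cip
  proof
    fix w assume w: "w \<in> W"
    have rdD: "r + d \<le> D" by (rule d_le)
    have dec: "w = (\<lambda>y. \<Sum>m\<le>d. Es (r + m) w y)"
    proof (rule decomp[OF _ rdD], intro allI impI conjI)
      fix y assume "w y \<noteq> 0"
      then show "r \<le> lay y" "lay y \<le> r + d" using below[OF w] Wtop[OF w] by (meson not_le)+
    qed
    have "w \<in> Sp"
    proof (subst dec, rule csubspace_sum[OF csSp])
      fix m assume "m \<in> {..d}"
      then have md: "m \<le> d" by simp
      obtain \<alpha> where \<alpha>: "Es (r + m) w = (\<lambda>y. \<alpha> * vk m y)" using thin_vk[OF md w] by blast
      show "Es (r + m) w \<in> Sp" unfolding \<alpha> by (rule csubspace_smult[OF csSp vkSp[OF md]])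
    qed simp
    then show "cip w chi = 0" by (rule Sp_orth)
  qed
qed

end

theorem lemma3p4:
  fixes R :: "nat \<Rightarrow> ('a::finite \<times> 'a) set" and D t :: nat and x :: 'a
    and chi :: "'a \<Rightarrow> complex"
  assumes "symmetric_association_scheme R D"
    and "metric_scheme R D"
    and "1 \<le> t" and "t \<le> D"
  shows "((\<forall>W. irreducible_T_module R D x W \<and> 1 \<le> endpoint R D x W \<and> endpoint R D x W \<le> t
               \<longrightarrow> orthogonal_to chi W)
          \<longleftrightarrow> (\<forall>F\<in>terwilliger_algebra R D x. relative_codesign R x t (mvmult F chi)))
       \<and> ((\<forall>W. irreducible_T_module R D x W \<and> endpoint R D x W \<le> t \<longrightarrow> thin R D x W)
          \<longrightarrow> (\<forall>l\<le>D. relative_codesign R x t (mvmult (adj (R l)) chi))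
          \<longrightarrow> (\<forall>W. irreducible_T_module R D x W \<and> 1 \<le> endpoint R D x W \<and> endpoint R D x W \<le> t
               \<longrightarrow> orthogonal_to chi W))"
proof -
  interpret ctx R D x using assms by unfold_locales simp_all
  show ?thesis
  proof (intro conjI impI iffI)
    assume H: "\<forall>W. irreducible_T_module R D x W \<and> 1 \<le> endpoint R D x W \<and> endpoint R D x W \<le> t
               \<longrightarrow> orthogonal_to chi W"
    show "\<forall>F\<in>terwilliger_algebra R D x. relative_codesign R x t (mvmult F chi)"
    proof
      fix F assume "F \<in> terwilliger_algebra R D x"
      then show "relative_codesign R x t (mvmult F chi)" by (rule partB[OF H assms(4)])
    qed
  next
    assume H: "\<forall>F\<in>terwilliger_algebra R D x. relative_codesign R x t (mvmult F chi)"
    show "\<forall>W. irreducible_T_module R D x W \<and> 1 \<le> endpoint R D x W \<and> endpoint R D x W \<le> t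
               \<longrightarrow> orthogonal_to chi W"
    proof (intro allI impI)
      fix W assume W: "irreducible_T_module R D x W \<and> 1 \<le> endpoint R D x W \<and> endpoint R D x W \<le> t"
      show "orthogonal_to chi W" using partA[OF H assms(4)] W by blast
    qed
  next
    assume TH: "\<forall>W. irreducible_T_module R D x W \<and> endpoint R D x W \<le> t \<longrightarrow> thin R D x W"
      and CD: "\<forall>l\<le>D. relative_codesign R x t (mvmult (adj (R l)) chi)"
    show "\<forall>W. irreducible_T_module R D x W \<and> 1 \<le> endpoint R D x W \<and> endpoint R D x W \<le> t
               \<longrightarrow> orthogonal_to chi W"
    proof (intro allI impI)
      fix W assume W: "irreducible_T_module R D x W \<and> 1 \<le> endpoint R D x W \<and> endpoint R D x W \<le> t"
      then have "thin R D x W" using TH by blast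
      then show "orthogonal_to chi W" using partC[OF _ CD] W by blast
    qed
  qed
qed

end
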